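(* For $g\in W$ and $\lambda\in\Lambda$ the following are equivalent: (a) $g\in\mathcal{D}_\lambda$; (b) $g^{-1}$ is order-preserving on $R^\lambda_i$ for all $i\in[0..r+1]$; (c) $g^{-1}$ is order-preserving on $R^\lambda_i$ for all $i\in\mathbb{Z}$.
   Context: Fix integers $r\ge 0$, $d\ge 2$, set $n=2r+2$, $D=2d+2$. Let $W$ be the group of bijections $g:\mathbb{Z}\to\mathbb{Z}$ with $g(i+D)=g(i)+D$, $g(-i)=-g(i)$ for all $i$; it is a Coxeter group with simple reflections $s_0,\dots,s_d$ where ($W$-elements being determined by their values on $1,\dots,d$) $s_0(1)=-1$, $s_0(k)=k$ ($2\le k\le d$); $s_d(d)=d+2$, $s_d(k)=k$ ($k<d$); and $s_i$ ($1\le i\le d-1$) swaps $i,i+1$ and fixes the other $k\in[1..d]$; $\ell$ is the Coxeter length. Let $\Lambda$ be the set of $\lambda=(\lambda_0,\dots,\lambda_{r+1})\in\mathbb{N}^{r+2}$ with $\sum\lambda_i=d$; put $\lambda_{0,i}=\lambda_0+\dots+\lambda_i$; $W_\lambda$ is the subgroup generated by $\{s_0,\dots,s_d\}\setminus\{s_{\lambda_{0,0}},\dots,s_{\lambda_{0,r}}\}$, and $\mathcal{D}_\lambda=\{g\in W\mid \ell(wg)=\ell(w)+\ell(g)\ \forall w\in W_\lambda\}$. Define integer intervals $R_0^\lambda=[-\lambda_0..\lambda_0]$, $R_i^\lambda=(\lambda_{0,i-1}..\lambda_{0,i}]$ ($1\le i\le r$), $R^\lambda_{r+1}=[d+1-\lambda_{r+1}..d+1+\lambda_{r+1}]$,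 and extend to all $i\in\mathbb{Z}$ recursively by $R^\lambda_{-i}=\{-x\mid x\in R^\lambda_i\}$ and $R^\lambda_{i+n}=\{x+D\mid x\in R^\lambda_i\}$. *)

theory Defs
  imports Main
begin

definition bigD :: "nat \<Rightarrow> int" where "bigD d = 2 * int d + 2"

definition Wgrp :: "nat \<Rightarrow> (int \<Rightarrow> int) set" where
  "Wgrp d = {g. bij g \<and> (\<forall>i. g (i + bigD d) = g i + bigD d) \<and> (\<forall>i. g (- i) = - g i)}"

text \<open>The unique element of W determined by its values v(1),...,v(d) on 1..d.\<close>
definition Wext :: "nat \<Rightarrow> (int \<Rightarrow> int) \<Rightarrow> int \<Rightarrow> int" where
  "Wext d v x = (let D = bigD d; q = x div D; m = x mod D in
     if m = 0 then q * D
     else if m \<le> int d then q * D + v m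
     else if m = int d + 1 then q * D + int d + 1
     else q * D + D - v (D - m))"

definition sref :: "nat \<Rightarrow> nat \<Rightarrow> int \<Rightarrow> int" where
  "sref d j = Wext d (\<lambda>k.
     if j = 0 then (if k = 1 then -1 else k)
     else if j = d then (if k = int d then int d + 2 else k)
     else (if k = int j then int j + 1 else if k = int j + 1 then int j else k))"

definition wordprod :: "nat \<Rightarrow> nat list \<Rightarrow> int \<Rightarrow> int" where
  "wordprod d ws = foldr (\<circ>) (map (sref d) ws) id"

definition coxlen :: "nat \<Rightarrow> (int \<Rightarrow> int) \<Rightarrow> nat" where
  "coxlen d g = (LEAST k. \<exists>ws. length ws = k \<and> set ws \<subseteq> {0..d} \<and> wordprod d ws = g)"

text \<open>Subgroup generated by the simple reflections with indices in J
 (the generators are involutions, so it consists of the products of words in J).\<close>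
definition Wpar :: "nat \<Rightarrow> nat set \<Rightarrow> (int \<Rightarrow> int) set" where
  "Wpar d J = {wordprod d ws | ws. set ws \<subseteq> J}"

definition lam0 :: "(nat \<Rightarrow> nat) \<Rightarrow> nat \<Rightarrow> nat" where
  "lam0 lam i = (\<Sum>j\<le>i. lam j)"

definition Wlam :: "nat \<Rightarrow> nat \<Rightarrow> (nat \<Rightarrow> nat) \<Rightarrow> (int \<Rightarrow> int) set" where
  "Wlam r d lam = Wpar d ({0..d} - {lam0 lam i | i. i \<le> r})"

definition Dlam :: "nat \<Rightarrow> nat \<Rightarrow> (nat \<Rightarrow> nat) \<Rightarrow> (int \<Rightarrow> int) set" where
  "Dlam r d lam = {g \<in> Wgrp d. \<forall>w \<in> Wlam r d lam. coxlen d (w \<circ> g) = coxlen d w + coxlen d g}"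

definition Rbase :: "nat \<Rightarrow> nat \<Rightarrow> (nat \<Rightarrow> nat) \<Rightarrow> nat \<Rightarrow> int set" where
  "Rbase r d lam i =
     (if i = 0 then {- int (lam 0) .. int (lam 0)}
      else if i \<le> r then {int (lam0 lam (i - 1)) + 1 .. int (lam0 lam i)}
      else {int d + 1 - int (lam (r + 1)) .. int d + 1 + int (lam (r + 1))})"

text \<open>R_i for all integers i, via R_{-i} = -R_i and R_{i+n} = R_i + D, n = 2r+2.\<close>
definition Rset :: "nat \<Rightarrow> nat \<Rightarrow> (nat \<Rightarrow> nat) \<Rightarrow> int \<Rightarrow> int set" where
  "Rset r d lam i = (let n = 2 * int r + 2; q = i div n; m = i mod n in
     if m \<le> int r + 1 then (\<lambda>x. x + q * bigD d) ` Rbase r d lam (nat m)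
     else (\<lambda>x. - x + (q + 1) * bigD d) ` Rbase r d lam (nat (n - m)))"

definition order_pres_on :: "(int \<Rightarrow> int) \<Rightarrow> int set \<Rightarrow> bool" where
  "order_pres_on f S = (\<forall>x\<in>S. \<forall>y\<in>S. x < y \<longrightarrow> f x < f y)"

end

theory Submission
  imports Defs
begin

lemma bigD_pos[simp]: "bigD d > 0" by (simp add: bigD_def)

definition perD :: "nat \<Rightarrow> (int \<Rightarrow> int) \<Rightarrow> bool" where
 "perD d g \<longleftrightarrow> (\<forall>x. g (x + bigD d) = g x + bigD d)"
definition oddf :: "(int \<Rightarrow> int) \<Rightarrow> bool" where
 "oddf g \<longleftrightarrow> (\<forall>x. g (- x) = - g x)"

lemma perD_mult:
  assumes "perD d g" shows "g (x + k * bigD d) = g x + k * bigD d"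
proof (induction k rule: int_induct[where k=0])
  case base then show ?case by simp
next
  case (step1 i)
  have "g (x + (i+1) * bigD d) = g ((x + i * bigD d) + bigD d)" by (simp add: algebra_simps)
  also have "\<dots> = g (x + i * bigD d) + bigD d" using assms by (simp add: perD_def)
  finally show ?case using step1 by (simp add: algebra_simps)
next
  case (step2 i)
  have "g (x + i * bigD d) = g ((x + (i - 1) * bigD d) + bigD d)" by (simp add: algebra_simps)
  also have "\<dots> = g (x + (i-1) * bigD d) + bigD d" using assms by (simp add: perD_def)
  finally show ?case using step2 by (simp add: algebra_simps)
qed

lemma po_zero: "oddf g \<Longrightarrow> g 0 = 0"
  unfolding oddf_def by (metis add.inverse_neutral add_eq_0_iff2 equal_neg_zero)

lemma po_refl: "perD d g \<Longrightarrow> oddf g \<Longrightarrow> g (bigD d - m) = bigD d - g m"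
  unfolding perD_def oddf_def by (metis diff_conv_add_uminus add.commute)

lemma po_mid: "perD d g \<Longrightarrow> oddf g \<Longrightarrow> g (int d + 1) = int d + 1"
  using po_refl[of d g "int d + 1"] by (simp add: bigD_def)

lemma per_odd_eq:
  assumes "perD d g" "oddf g" "perD d h" "oddf h" "\<forall>k. 1 \<le> k \<and> k \<le> int d \<longrightarrow> g k = h k"
  shows "g = h"
proof
  fix x
  have base: "g m = h m" if "0 \<le> m" "m < bigD d" for m
  proof -
    have "m = 0 \<or> (1 \<le> m \<and> m \<le> int d) \<or> m = int d + 1 \<or> int d + 2 \<le> m" using that by (simp add: bigD_def) linarith
    then consider "m = 0" | "1 \<le> m \<and> m \<le> int d" | "m = int d + 1" | "int d + 2 \<le> m" by blast
    then show ?thesis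
    proof cases
      case 1 then show ?thesis using po_zero[OF assms(2)] po_zero[OF assms(4)] by simp
    next
      case 2 then show ?thesis using assms by simp
    next
      case 3 then show ?thesis using po_mid[OF assms(1,2)] po_mid[OF assms(3,4)] by simp
    next
      case 4
      have "g m = g (bigD d - (bigD d - m))" by simp
      also have "\<dots> = bigD d - g (bigD d - m)" using po_refl assms by blast
      also have "g (bigD d - m) = h (bigD d - m)" using assms(5) 4 that by (simp add: bigD_def)
      also have "bigD d - h (bigD d - m) = h (bigD d - (bigD d - m))" using po_refl assms by metis
      finally show ?thesis by simp
    qed
  qed
  have x: "x = x mod bigD d + (x div bigD d) * bigD d" by simp
  have "g x = g (x mod bigD d) + (x div bigD d) * bigD d" using perD_mult[OF assms(1)] x by metis
  moreover have "h x = h (x mod bigD d) + (x div bigD d) * bigD d" using perD_mult[OF assms(3)] x by metis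
  moreover have "g (x mod bigD d) = h (x mod bigD d)" by (rule base) auto
  ultimately show "g x = h x" by simp
qed

lemma Wext_per: "perD d (Wext d v)"
proof -
  have "(x + bigD d) div bigD d = x div bigD d + 1" for x
    by (rule div_add_self2) (simp add: bigD_def)
  moreover have "(x + bigD d) mod bigD d = x mod bigD d" for x by simp
  ultimately show ?thesis unfolding perD_def Wext_def Let_def by (simp add: algebra_simps)
qed

lemma Wext_odd: "oddf (Wext d v)"
  unfolding oddf_def
proof
  fix x
  define D where "D = bigD d"
  define q where "q = x div D"
  define m where "m = x mod D"
  have Dp: "D > 0" by (simp add: D_def)
  have m: "0 \<le> m" "m < D" using Dp by (auto simp: m_def)
  have DD: "D = 2 * int d + 2" by (simp add: D_def bigD_def)
  show "Wext d v (- x) = - Wext d v x"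
  proof (cases "m = 0")
    case True
    then have "(-x) mod D = 0" "(-x) div D = - q" using Dp by (auto simp: zmod_zminus1_eq_if zdiv_zminus1_eq_if m_def q_def)
    then show ?thesis using True by (simp add: Wext_def Let_def D_def[symmetric] m_def[symmetric] q_def[symmetric])
  next
    case False
    then have e: "(-x) mod D = D - m" "(-x) div D = - q - 1" using Dp by (auto simp: zmod_zminus1_eq_if zdiv_zminus1_eq_if m_def q_def)
    show ?thesis
      using False m unfolding Wext_def Let_def D_def[symmetric] e m_def[symmetric] q_def[symmetric]
      by (simp add: DD algebra_simps)
  qed
qed

lemma Wext_base: "1 \<le> k \<Longrightarrow> k \<le> int d \<Longrightarrow> Wext d v k = v k"
  unfolding Wext_def Let_def by (simp add: bigD_def)

lemma dvdD:
  assumes "bigD d dvd z"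
  shows "z \<le> -2 * (2 * int d + 2) \<or> z = -(2 * int d + 2) \<or> z = 0 \<or> z = 2 * int d + 2 \<or> z \<ge> 2 * (2 * int d + 2)"
proof -
  define D where "D = 2 * int d + 2"
  have Dp: "D > 0" by (simp add: D_def)
  obtain t where z: "z = D * t" using assms by (auto simp: bigD_def D_def elim: dvdE)
  have "t \<le> -2 \<or> t = -1 \<or> t = 0 \<or> t = 1 \<or> t \<ge> 2" by linarith
  then have "z \<le> -2 * D \<or> z = -D \<or> z = 0 \<or> z = D \<or> z \<ge> 2 * D"
  proof (elim disjE)
    assume "t \<le> -2" hence "D * t \<le> D * (-2)" using Dp by (intro mult_left_mono) auto
    thus ?thesis using z by simp
  next
    assume "t \<ge> 2" hence "D * t \<ge> D * 2" using Dp by (intro mult_left_mono) auto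
    thus ?thesis using z by simp
  qed (use z in auto)
  then show ?thesis by (simp add: D_def)
qed

definition Fm :: "nat \<Rightarrow> int \<Rightarrow> bool" where
  "Fm d x \<longleftrightarrow> bigD d dvd x \<or> bigD d dvd (x - (int d + 1))"

lemma Fm_cong: "bigD d dvd (x - y) \<Longrightarrow> Fm d x = Fm d y"
proof -
  assume h: "bigD d dvd (x - y)"
  have 1: "bigD d dvd x \<longleftrightarrow> bigD d dvd y"
  proof -
    have "x = (x - y) + y" by simp
    then show ?thesis using h by (metis dvd_add_right_iff)
  qed
  have 2: "bigD d dvd (x - (int d + 1)) \<longleftrightarrow> bigD d dvd (y - (int d + 1))"
  proof -
    have "x - (int d + 1) = (x - y) + (y - (int d + 1))" by simp
    then show ?thesis using h by (metis dvd_add_right_iff)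
  qed
  show ?thesis using 1 2 by (simp add: Fm_def)
qed

lemma Fm_shift: "Fm d (x + k * bigD d) = Fm d x"
  by (rule Fm_cong) simp

lemma Fm_neg: "Fm d (- x) = Fm d x"
proof -
  have "bigD d dvd (- x) \<longleftrightarrow> bigD d dvd x" by simp
  moreover have "bigD d dvd (- x - (int d + 1)) \<longleftrightarrow> bigD d dvd (x - (int d + 1))"
  proof -
    have "- x - (int d + 1) = - (x - (int d + 1)) + (- bigD d)" by (simp add: bigD_def)
    then show ?thesis by (metis dvd_add_left_iff dvd_minus_iff dvd_refl)
  qed
  ultimately show ?thesis by (simp add: Fm_def)
qed

definition swf :: "int \<Rightarrow> int \<Rightarrow> int \<Rightarrow> int \<Rightarrow> int" where
  "swf D a b x = (if D dvd (x - a) \<or> D dvd (x + b) then x + (b - a)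
     else if D dvd (x - b) \<or> D dvd (x + a) then x - (b - a) else x)"

locale sw =
  fixes d :: nat and a b :: int
  assumes d2: "d \<ge> 2"
  and ab: "(a = -1 \<and> b = 1) \<or> (1 \<le> a \<and> a \<le> int d - 1 \<and> b = a + 1) \<or> (a = int d \<and> b = int d + 2)"
begin

abbreviation "s \<equiv> swf (bigD d) a b"
abbreviation "U x \<equiv> bigD d dvd (x - a) \<or> bigD d dvd (x + b)"
abbreviation "Dn x \<equiv> bigD d dvd (x - b) \<or> bigD d dvd (x + a)"

lemma del: "b - a = 1 \<or> b - a = 2" using ab by auto

lemma F1: "\<not> bigD d dvd (2 * a)" "\<not> bigD d dvd (2 * b)" "\<not> bigD d dvd (b - a)"
proof -
  show "\<not> bigD d dvd (2 * a)" using ab d2 by (elim disjE; auto dest!: dvdD)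
  show "\<not> bigD d dvd (2 * b)" using ab d2 by (elim disjE; auto dest!: dvdD)
  show "\<not> bigD d dvd (b - a)" using ab d2 dvdD[of d "b - a"] by (elim disjE; auto)
qed

lemma F2: "\<not> Fm d a" "\<not> Fm d b"
  using ab d2 dvdD[of d a] dvdD[of d b] dvdD[of d "a - (int d + 1)"] dvdD[of d "b - (int d + 1)"]
  by (auto simp: Fm_def)

lemma F3: "b - a = 2 \<Longrightarrow> Fm d (a + 1)"
  using ab d2 by (auto simp: Fm_def)

lemma F4: "1 \<le> t \<Longrightarrow> t \<le> 2 * (b - a) \<Longrightarrow> t \<noteq> b - a \<Longrightarrow> \<not> bigD d dvd (t + 2 * a) \<and> \<not> bigD d dvd (t - 2 * b)"
  using ab d2 dvdD[of d "t + 2 * a"] dvdD[of d "t - 2 * b"] by (elim disjE; auto)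

end

definition Ps :: "nat \<Rightarrow> (int \<times> int) set" where
  "Ps d = {(x, y). x < y \<and> \<not> Fm d x \<and> \<not> Fm d y}"
definition Invs :: "nat \<Rightarrow> (int \<Rightarrow> int) \<Rightarrow> (int \<times> int) set" where
  "Invs d f = {p \<in> Ps d. f (snd p) < f (fst p)}"
definition orbp :: "nat \<Rightarrow> int \<times> int \<Rightarrow> (int \<times> int) set" where
  "orbp d p = (\<lambda>k. (fst p + k * bigD d, snd p + k * bigD d)) ` UNIV
            \<union> (\<lambda>k. (- snd p + k * bigD d, - fst p + k * bigD d)) ` UNIV"

context sw begin

lemma UD_disj: "\<not> (U x \<and> Dn x)"
proof
  assume h: "U x \<and> Dn x"
  have e1: "b - a = (x - a) - (x - b)" "2 * a = (x + a) - (x - a)" "2 * b = (x + b) - (x - b)"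
           "b - a = (x + b) - (x + a)" by simp_all
  show False using h F1 e1 by (metis dvd_add dvd_diff)
qed

lemma s_U: assumes "U x" shows "s x = x + (b - a)" unfolding swf_def using assms by (rule if_P)
lemma s_Dn: "Dn x \<Longrightarrow> s x = x - (b - a)" using UD_disj[of x] by (auto simp: swf_def)
lemma s_oth: "\<not> U x \<Longrightarrow> \<not> Dn x \<Longrightarrow> s x = x" by (simp add: swf_def)

lemma U_shift: "U x \<Longrightarrow> Dn (x + (b - a))"
proof -
  have "x + (b - a) - b = x - a" "x + (b - a) + a = x + b" by simp_all
  then show "U x \<Longrightarrow> Dn (x + (b - a))" by metis
qed

lemma Dn_shift: "Dn x \<Longrightarrow> U (x - (b - a))"
proof -
  have "x - (b - a) - a = x - b" "x - (b - a) + b = x + a" by simp_all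
  then show "Dn x \<Longrightarrow> U (x - (b - a))" by metis
qed

lemma invol[simp]: "s (s x) = x"
proof -
  consider "U x" | "Dn x" | "\<not> U x \<and> \<not> Dn x" by blast
  then show ?thesis
  proof cases
    case 1 then show ?thesis using s_U U_shift s_Dn by simp
  next
    case 2 then show ?thesis using s_Dn Dn_shift s_U by simp
  qed (simp add: swf_def)
qed

lemma s_comp: "s \<circ> s = id" by (simp add: fun_eq_iff)

lemma s_bij: "bij s"
  by (metis bij_betw_imageI comp_apply inj_on_inverseI invol surj_def)

lemma inv_s: "inv s = s" using inv_unique_comp[OF s_comp s_comp] .

lemma s_per: "perD d s"
  unfolding perD_def
proof
  fix x
  have i1: "x + bigD d - c = (x - c) + bigD d" "x + bigD d + c = (x + c) + bigD d" for c by simp_all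
  have "bigD d dvd (z + bigD d) \<longleftrightarrow> bigD d dvd z" for z by simp
  then show "s (x + bigD d) = s x + bigD d" unfolding swf_def i1 by simp
qed

lemma s_odd: "oddf s"
  unfolding oddf_def
proof
  fix x
  have i1: "- x - c = - (x + c)" for c :: int by linarith
  have i2: "- x + c = - (x - c)" for c :: int by linarith
  have "U (- x) = Dn x" "Dn (- x) = U x" unfolding i1 i2 dvd_minus_iff by auto
  then show "s (- x) = - s x" using UD_disj[of x] by (auto simp: swf_def)
qed

lemma s_Wgrp: "s \<in> Wgrp d"
  using s_bij s_per s_odd unfolding Wgrp_def perD_def oddf_def by blast

lemma s_fixF: "Fm d x \<Longrightarrow> s x = x"
proof -
  assume F: "Fm d x"
  have "\<not> U x"
  proof
    assume "U x"
    then show False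
    proof
      assume "bigD d dvd (x - a)" then have "Fm d a" using F Fm_cong[of d x a] by simp
      then show False using F2 by simp
    next
      assume h: "bigD d dvd (x + b)"
      have "x + b = x - (- b)" by simp
      then have "Fm d (- b)" using F Fm_cong[of d x "- b"] h by simp
      then show False using F2 Fm_neg by simp
    qed
  qed
  moreover have "\<not> Dn x"
  proof
    assume "Dn x"
    then show False
    proof
      assume "bigD d dvd (x - b)" then have "Fm d b" using F Fm_cong[of d x b] by simp
      then show False using F2 by simp
    next
      assume h: "bigD d dvd (x + a)"
      have "x + a = x - (- a)" by simp
      then have "Fm d (- a)" using F Fm_cong[of d x "- a"] h by simp
      then show False using F2 Fm_neg by simp
    qed
  qed
  ultimately show ?thesis by (simp add: swf_def)
qed

lemma s_nonF: "\<not> Fm d x \<Longrightarrow> \<not> Fm d (s x)"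
  by (metis invol s_fixF)

lemma s_bounds: "x - (b - a) \<le> s x" "s x \<le> x + (b - a)"
  using del by (auto simp: swf_def)

lemma U_F: "b - a = 2 \<Longrightarrow> U x \<Longrightarrow> Fm d (x + 1)"
proof -
  assume d2': "b - a = 2" and "U x"
  have Fa: "Fm d (a + 1)" using F3 d2' .
  from \<open>U x\<close> show ?thesis
  proof
    assume "bigD d dvd (x - a)"
    then have "bigD d dvd ((x + 1) - (a + 1))" by simp
    then show ?thesis using Fa Fm_cong by blast
  next
    assume "bigD d dvd (x + b)"
    then have "bigD d dvd ((x + 1) - (- (a + 1)))" using d2' by (simp add: algebra_simps)
    then show ?thesis using Fa Fm_cong Fm_neg by metis
  qed
qed

lemma Dn_F: "b - a = 2 \<Longrightarrow> Dn y \<Longrightarrow> Fm d (y - 1)"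
proof -
  assume d2': "b - a = 2" and "Dn y"
  then have "U (y - 2)" using Dn_shift by simp
  then have "Fm d (y - 2 + 1)" using U_F d2' by blast
  then show ?thesis by simp
qed

lemma s_order:
  assumes xy: "x < y" and nx: "\<not> Fm d x" and ny: "\<not> Fm d y" and sxy: "s x \<noteq> y"
  shows "s x < s y"
proof -
  consider "Dn x" | "\<not> U x \<and> \<not> Dn x" | "U x" by blast
  then show ?thesis
  proof cases
    case 1 then show ?thesis using s_Dn s_bounds[of y] xy by simp
  next
    case 2
    then have sx: "s x = x" by (simp add: swf_def)
    show ?thesis
    proof (cases "Dn y")
      case False then show ?thesis using sx xy s_bounds[of y] UD_disj[of y]
        by (cases "U y") (auto simp: swf_def)
    next
      case True
      have sy: "s y = y - (b - a)" using s_Dn True .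
      show ?thesis
      proof (rule ccontr)
        assume "\<not> s x < s y"
        then have "y \<le> x + (b - a)" using sx sy by simp
        then consider "y = x + (b - a)" | "b - a = 2 \<and> y = x + 1" using del xy by linarith
        then show False
        proof cases
          case 1 then have "s y = x" using sy by simp
          then have "s x = y" using invol by metis
          then show False using sx xy by simp
        next
          case 2 then have "Fm d (y - 1)" using Dn_F True by blast
          then show False using 2 nx by simp
        qed
      qed
    qed
  next
    case 3
    then have sx: "s x = x + (b - a)" by (rule s_U)
    consider "U y" | "\<not> U y \<and> \<not> Dn y" | "Dn y" by blast
    then show ?thesis
    proof cases
      case 1 then show ?thesis using sx s_U xy by simp
    next
      case 2
      then have sy: "s y = y" by (simp add: swf_def)
      show ?thesis
      proof (rule ccontr)
        assume "\<not> s x < s y"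
        then have "y \<le> x + (b - a)" using sx sy by simp
        then consider "y = x + (b - a)" | "b - a = 2 \<and> y = x + 1" using del xy by linarith
        then show False
        proof cases
          case 1 then show False using sx sxy by simp
        next
          case 2 then have "Fm d (x + 1)" using U_F 3 by blast
          then show False using 2 ny by simp
        qed
      qed
    next
      case 4: 3
      have sy: "s y = y - (b - a)" using s_Dn 4 .
      show ?thesis
      proof (rule ccontr)
        assume "\<not> s x < s y"
        then have t2: "y - x \<le> 2 * (b - a)" using sx sy by simp
        have tne: "y - x \<noteq> b - a" using sx sxy by auto
        have t1: "1 \<le> y - x" using xy by simp
        have nd: "\<not> bigD d dvd (y - x - (b - a))"
          using t1 t2 tne del d2 dvdD[of d "y - x - (b - a)"] by auto
        have F4': "\<not> bigD d dvd (y - x + 2 * a)" "\<not> bigD d dvd (y - x - 2 * b)"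
          using F4[OF t1 t2 tne] by auto
        have e: "y - x - (b - a) = (y - b) - (x - a)" "y - x + 2 * a = (y + a) - (x - a)"
                "y - x - 2 * b = (y - b) - (x + b)" "y - x - (b - a) = (y + a) - (x + b)" by simp_all
        show False using 3 4 nd F4' e by (metis dvd_diff)
      qed
    qed
  qed
qed

lemma ab_P: "(a, b) \<in> Ps d" using F2 ab by (auto simp: Ps_def)

lemma s_a: "s a = b" by (simp add: swf_def)
lemma s_b: "s b = a" using s_a invol by metis

lemma S_orb:
  assumes "x < y" "s x = y" shows "(x, y) \<in> orbp d (a, b)"
proof -
  have "U x"
  proof (rule ccontr)
    assume "\<not> U x"
    then have "s x \<le> x" using del by (auto simp: swf_def)
    then show False using assms by simp
  qed
  then have y: "y = x + (b - a)" using s_U assms by simp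
  from \<open>U x\<close> show ?thesis
  proof
    assume "bigD d dvd (x - a)"
    then obtain k where "x - a = bigD d * k" by (auto elim: dvdE)
    then have "(x, y) = (a + k * bigD d, b + k * bigD d)" using y by (simp add: algebra_simps)
    then show ?thesis unfolding orbp_def by auto
  next
    assume "bigD d dvd (x + b)"
    then obtain k where "x + b = bigD d * k" by (auto elim: dvdE)
    then have "(x, y) = (- b + k * bigD d, - a + k * bigD d)" using y by (simp add: algebra_simps)
    then show ?thesis unfolding orbp_def by auto
  qed
qed

lemma orb_S:
  assumes "p \<in> orbp d (a, b)" shows "p \<in> Ps d \<and> s (fst p) = snd p"
proof -
  have Pab: "a < b" "\<not> Fm d a" "\<not> Fm d b" using ab_P by (auto simp: Ps_def)
  from assms consider k where "p = (a + k * bigD d, b + k * bigD d)"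
    | k where "p = (- b + k * bigD d, - a + k * bigD d)" unfolding orbp_def by auto
  then show ?thesis
  proof cases
    case 1
    then show ?thesis using Pab Fm_shift perD_mult[OF s_per] s_a by (auto simp: Ps_def)
  next
    case 2
    have "s (- b + k * bigD d) = - a + k * bigD d"
      using perD_mult[OF s_per] s_odd s_b unfolding oddf_def by metis
    have "Fm d (k * bigD d - b) = Fm d b" "Fm d (k * bigD d - a) = Fm d a"
      using Fm_shift[of d "-b" k] Fm_shift[of d "-a" k] Fm_neg by (simp_all add: algebra_simps)
    then show ?thesis using 2 Pab \<open>s (- b + k * bigD d) = - a + k * bigD d\<close> by (auto simp: Ps_def)
  qed
qed

end

lemma orb_self: "p \<in> orbp d p"
  unfolding orbp_def by (rule UnI1, rule image_eqI[where x=0]) auto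

lemma orb_trans: assumes "q \<in> orbp d p" shows "orbp d q = orbp d p"
proof -
  obtain x y where p: "p = (x, y)" by (cases p)
  let ?D = "bigD d"
  from assms consider k where "q = (x + k * ?D, y + k * ?D)" | k where "q = (- y + k * ?D, - x + k * ?D)"
    unfolding orbp_def p by auto
  then show ?thesis
  proof cases
    case 1
    show ?thesis unfolding orbp_def 1 p
    proof (intro equalityI subsetI)
      fix z assume "z \<in> (\<lambda>j. (fst (x + k * ?D, y + k * ?D) + j * ?D, snd (x + k * ?D, y + k * ?D) + j * ?D)) ` UNIV \<union>
          (\<lambda>j. (- snd (x + k * ?D, y + k * ?D) + j * ?D, - fst (x + k * ?D, y + k * ?D) + j * ?D)) ` UNIV"
      then consider j where "z = (x + (k + j) * ?D, y + (k + j) * ?D)" | j where "z = (- y + (j - k) * ?D, - x + (j - k) * ?D)"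
        by (auto simp: algebra_simps)
      then show "z \<in> (\<lambda>k. (fst (x, y) + k * ?D, snd (x, y) + k * ?D)) ` UNIV \<union> (\<lambda>k. (- snd (x, y) + k * ?D, - fst (x, y) + k * ?D)) ` UNIV"
        by cases auto
    next
      fix z assume "z \<in> (\<lambda>k. (fst (x, y) + k * ?D, snd (x, y) + k * ?D)) ` UNIV \<union> (\<lambda>k. (- snd (x, y) + k * ?D, - fst (x, y) + k * ?D)) ` UNIV"
      then consider j where "z = (x + j * ?D, y + j * ?D)" | j where "z = (- y + j * ?D, - x + j * ?D)" by auto
      then show "z \<in> (\<lambda>j. (fst (x + k * ?D, y + k * ?D) + j * ?D, snd (x + k * ?D, y + k * ?D) + j * ?D)) ` UNIV \<union>
          (\<lambda>j. (- snd (x + k * ?D, y + k * ?D) + j * ?D, - fst (x + k * ?D, y + k * ?D) + j * ?D)) ` UNIV"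
      proof cases
        case (1 j) then show ?thesis by (intro UnI1 image_eqI[where x="j - k"]) (auto simp: algebra_simps)
      next
        case (2 j) then show ?thesis by (intro UnI2 image_eqI[where x="j + k"]) (auto simp: algebra_simps)
      qed
    qed
  next
    case 2
    show ?thesis unfolding orbp_def 2 p
    proof (intro equalityI subsetI)
      fix z assume "z \<in> (\<lambda>j. (fst (- y + k * ?D, - x + k * ?D) + j * ?D, snd (- y + k * ?D, - x + k * ?D) + j * ?D)) ` UNIV \<union>
          (\<lambda>j. (- snd (- y + k * ?D, - x + k * ?D) + j * ?D, - fst (- y + k * ?D, - x + k * ?D) + j * ?D)) ` UNIV"
      then consider j where "z = (- y + (k + j) * ?D, - x + (k + j) * ?D)" | j where "z = (x + (j - k) * ?D, y + (j - k) * ?D)"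
        by (auto simp: algebra_simps)
      then show "z \<in> (\<lambda>k. (fst (x, y) + k * ?D, snd (x, y) + k * ?D)) ` UNIV \<union> (\<lambda>k. (- snd (x, y) + k * ?D, - fst (x, y) + k * ?D)) ` UNIV"
        by cases auto
    next
      fix z assume "z \<in> (\<lambda>k. (fst (x, y) + k * ?D, snd (x, y) + k * ?D)) ` UNIV \<union> (\<lambda>k. (- snd (x, y) + k * ?D, - fst (x, y) + k * ?D)) ` UNIV"
      then consider j where "z = (x + j * ?D, y + j * ?D)" | j where "z = (- y + j * ?D, - x + j * ?D)" by auto
      then show "z \<in> (\<lambda>j. (fst (- y + k * ?D, - x + k * ?D) + j * ?D, snd (- y + k * ?D, - x + k * ?D) + j * ?D)) ` UNIV \<union>
          (\<lambda>j. (- snd (- y + k * ?D, - x + k * ?D) + j * ?D, - fst (- y + k * ?D, - x + k * ?D) + j * ?D)) ` UNIV"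
      proof cases
        case (1 j) then show ?thesis by (intro UnI2 image_eqI[where x="j + k"]) (auto simp: algebra_simps)
      next
        case (2 j) then show ?thesis by (intro UnI1 image_eqI[where x="j - k"]) (auto simp: algebra_simps)
      qed
    qed
  qed
qed

lemma orb_sym: assumes "q \<in> orbp d p" shows "p \<in> orbp d q"
proof -
  have "orbp d q = orbp d p" using orb_trans[OF assms] .
  then show ?thesis using orb_self[of p d] by simp
qed

lemma Ps_orb: assumes "p \<in> Ps d" "q \<in> orbp d p" shows "q \<in> Ps d"
proof -
  obtain x y where p: "p = (x, y)" by (cases p)
  have h: "x < y" "\<not> Fm d x" "\<not> Fm d y" using assms(1) p by (auto simp: Ps_def)
  from assms(2) consider k where "q = (x + k * bigD d, y + k * bigD d)"
    | k where "q = (- y + k * bigD d, - x + k * bigD d)" unfolding orbp_def p by auto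
  then show ?thesis
  proof cases
    case 1 with h show ?thesis using Fm_shift[of d x k] Fm_shift[of d y k] by (auto simp: Ps_def)
  next
    case 2 with h show ?thesis using Fm_shift[of d "-x" k] Fm_shift[of d "-y" k] Fm_neg[of d x] Fm_neg[of d y]
      by (auto simp: Ps_def)
  qed
qed

lemma Invs_orb: assumes "perD d f" "oddf f" "p \<in> Invs d f" "q \<in> orbp d p" shows "q \<in> Invs d f"
proof -
  obtain x y where p: "p = (x, y)" by (cases p)
  have lt: "f y < f x" using assms(3) p by (auto simp: Invs_def)
  have qP: "q \<in> Ps d" using Ps_orb[of p d q] assms(3,4) by (auto simp: Invs_def)
  from assms(4) consider k where "q = (x + k * bigD d, y + k * bigD d)"
    | k where "q = (- y + k * bigD d, - x + k * bigD d)" unfolding orbp_def p by auto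
  then show ?thesis
  proof cases
    case 1 then show ?thesis using qP lt perD_mult[OF assms(1)] by (auto simp: Invs_def)
  next
    case 2
    have "f (- y + k * bigD d) = - f y + k * bigD d" "f (- x + k * bigD d) = - f x + k * bigD d"
      using perD_mult[OF assms(1)] assms(2) unfolding oddf_def by metis+
    then show ?thesis using 2 qP lt by (auto simp: Invs_def)
  qed
qed

lemma Wgrp_po: "g \<in> Wgrp d \<Longrightarrow> perD d g \<and> oddf g \<and> bij g"
  unfolding Wgrp_def perD_def oddf_def by blast

lemma Wgrp_bound: assumes "g \<in> Wgrp d" shows "\<exists>B. \<forall>x. \<bar>g x - x\<bar> \<le> B"
proof -
  let ?B = "Max ((\<lambda>m. \<bar>g m - m\<bar>) ` {0..<bigD d})"
  have "\<bar>g x - x\<bar> \<le> ?B" for x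
  proof -
    have x: "x = x mod bigD d + (x div bigD d) * bigD d" by simp
    have "g x = g (x mod bigD d) + (x div bigD d) * bigD d"
      using perD_mult Wgrp_po[OF assms] x by metis
    then have "\<bar>g x - x\<bar> = \<bar>g (x mod bigD d) - x mod bigD d\<bar>" using x by (metis add_diff_cancel_right diff_add_eq_diff_diff_swap diff_diff_eq2)
    also have "\<dots> \<le> ?B" by (intro Max_ge) auto
    finally show ?thesis .
  qed
  then show ?thesis by blast
qed

lemma orb_norm: "\<exists>q \<in> orbp d p. 0 \<le> fst q + snd q \<and> fst q + snd q \<le> bigD d"
proof -
  obtain x y where p: "p = (x, y)" by (cases p)
  define D where "D = bigD d"
  have Dp: "D > 0" by (simp add: D_def)
  define k where "k = (x + y + D) div (2 * D)"
  define c where "c = (x + y + D) mod (2 * D)"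
  have c: "0 \<le> c" "c < 2 * D" using Dp by (auto simp: c_def)
  have e: "x + y + D = 2 * D * k + c" by (simp add: k_def c_def)
  show ?thesis
  proof (cases "c \<ge> D")
    case True
    let ?q = "(x + (- k) * D, y + (- k) * D)"
    have "?q \<in> orbp d p" unfolding orbp_def p D_def by (intro UnI1 image_eqI[where x="-k"]) auto
    moreover have "0 \<le> fst ?q + snd ?q \<and> fst ?q + snd ?q \<le> D" using e c True by (simp add: algebra_simps)
    ultimately show ?thesis unfolding D_def by blast
  next
    case False
    let ?q = "(- y + k * D, - x + k * D)"
    have "?q \<in> orbp d p" unfolding orbp_def p D_def by (intro UnI2 image_eqI[where x="k"]) auto
    moreover have "0 \<le> fst ?q + snd ?q \<and> fst ?q + snd ?q \<le> D" using e c False by (simp add: algebra_simps)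
    ultimately show ?thesis unfolding D_def by blast
  qed
qed

lemma finite_O: assumes "f \<in> Wgrp d" shows "finite (orbp d ` Invs d f)"
proof -
  obtain B where B: "\<And>x. \<bar>f x - x\<bar> \<le> B" using Wgrp_bound[OF assms] by blast
  have po: "perD d f" "oddf f" using Wgrp_po[OF assms] by auto
  let ?C = "Invs d f \<inter> {q. 0 \<le> fst q + snd q \<and> fst q + snd q \<le> bigD d}"
  have "?C \<subseteq> {-B..bigD d + B} \<times> {-B..bigD d + B}"
  proof
    fix q assume q: "q \<in> ?C"
    obtain x y where qx: "q = (x, y)" by (cases q)
    have "x < y" "f y < f x" using q qx by (auto simp: Invs_def Ps_def)
    moreover have "\<bar>f x - x\<bar> \<le> B" "\<bar>f y - y\<bar> \<le> B" using B by auto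
    moreover have "0 \<le> x + y" "x + y \<le> bigD d" using q qx by auto
    ultimately show "q \<in> {-B..bigD d + B} \<times> {-B..bigD d + B}" using qx by auto
  qed
  then have fC: "finite ?C" by (rule finite_subset) auto
  have "orbp d ` Invs d f \<subseteq> orbp d ` ?C"
  proof
    fix Ob assume "Ob \<in> orbp d ` Invs d f"
    then obtain p where p: "p \<in> Invs d f" "Ob = orbp d p" by auto
    obtain q where q: "q \<in> orbp d p" "0 \<le> fst q + snd q \<and> fst q + snd q \<le> bigD d" using orb_norm by blast
    have "q \<in> Invs d f" using Invs_orb[OF po p(1) q(1)] .
    moreover have "Ob = orbp d q" using orb_trans[OF q(1)] p by simp
    ultimately show "Ob \<in> orbp d ` ?C" using q by auto
  qed
  then show ?thesis using fC by (meson finite_imageI finite_subset)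
qed

definition NN :: "nat \<Rightarrow> (int \<Rightarrow> int) \<Rightarrow> nat" where
  "NN d f = card (orbp d ` Invs d f)"

context sw begin

definition sp :: "int \<times> int \<Rightarrow> int \<times> int" where "sp p = (s (fst p), s (snd p))"

lemma sp_invol[simp]: "sp (sp p) = p" by (simp add: sp_def)

lemma sp_inj: "inj sp" by (metis injI sp_invol)

lemma sp_orb: "sp ` orbp d p = orbp d (sp p)"
proof -
  obtain x y where p: "p = (x, y)" by (cases p)
  have 1: "sp (x + k * bigD d, y + k * bigD d) = (s x + k * bigD d, s y + k * bigD d)" for k
    using perD_mult[OF s_per] by (simp add: sp_def)
  have o: "s (- z + k * bigD d) = - s z + k * bigD d" for z k
    using perD_mult[OF s_per, of "- z" k] s_odd unfolding oddf_def by simp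
  have 2: "sp (- y + k * bigD d, - x + k * bigD d) = (- s y + k * bigD d, - s x + k * bigD d)" for k
    unfolding sp_def fst_conv snd_conv o by (rule refl)
  have 3: "sp (x, y) = (s x, s y)" by (simp add: sp_def)
  show ?thesis unfolding orbp_def p image_Un image_image fst_conv snd_conv 1 2 3 by simp
qed

lemma S_prop: "p \<in> orbp d (a, b) \<Longrightarrow> p \<in> Ps d \<and> s (fst p) = snd p" using orb_S by blast

lemma sp_P: assumes "p \<in> Ps d" "p \<notin> orbp d (a, b)" shows "sp p \<in> Ps d \<and> sp p \<notin> orbp d (a, b)"
proof -
  obtain x y where p: "p = (x, y)" by (cases p)
  have h: "x < y" "\<not> Fm d x" "\<not> Fm d y" using assms(1) p by (auto simp: Ps_def)
  have ne: "s x \<noteq> y" using S_orb h assms(2) p by blast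
  have "s x < s y" using s_order h ne by blast
  moreover have "\<not> Fm d (s x)" "\<not> Fm d (s y)" using s_nonF h by auto
  ultimately have P: "sp p \<in> Ps d" by (simp add: sp_def p Ps_def)
  have "sp p \<notin> orbp d (a, b)"
  proof
    assume "sp p \<in> orbp d (a, b)"
    then have "s (fst (sp p)) = snd (sp p)" using S_prop by blast
    then have "s (s x) = s y" by (simp add: sp_def p)
    then have "s x = y" by (metis invol)
    then show False using ne by simp
  qed
  then show ?thesis using P by simp
qed

lemma E1: assumes "inj f"
  shows "Invs d (f \<circ> s) = sp ` (Invs d f - orbp d (a, b)) \<union> (orbp d (a, b) - Invs d f)"
proof (intro equalityI subsetI)
  fix p assume p: "p \<in> Invs d (f \<circ> s)"
  obtain x y where px: "p = (x, y)" by (cases p)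
  have pP: "p \<in> Ps d" and lt: "f (s y) < f (s x)" using p px by (auto simp: Invs_def)
  show "p \<in> sp ` (Invs d f - orbp d (a, b)) \<union> (orbp d (a, b) - Invs d f)"
  proof (cases "p \<in> orbp d (a, b)")
    case True
    then have "s x = y" using S_prop px by auto
    then have "s y = x" by (metis invol)
    then have "p \<notin> Invs d f" using lt \<open>s x = y\<close> px by (auto simp: Invs_def)
    then show ?thesis using True by blast
  next
    case False
    have q: "sp p \<in> Ps d" "sp p \<notin> orbp d (a, b)" using sp_P[OF pP False] by auto
    then have "sp p \<in> Invs d f" using lt px by (simp add: Invs_def sp_def)
    then have "sp (sp p) \<in> sp ` (Invs d f - orbp d (a, b))" using q by blast
    then show ?thesis by simp
  qed
next
  fix p assume "p \<in> sp ` (Invs d f - orbp d (a, b)) \<union> (orbp d (a, b) - Invs d f)"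
  then show "p \<in> Invs d (f \<circ> s)"
  proof
    assume "p \<in> sp ` (Invs d f - orbp d (a, b))"
    then obtain q where q: "q \<in> Invs d f" "q \<notin> orbp d (a, b)" "p = sp q" by auto
    have "q \<in> Ps d" using q by (simp add: Invs_def)
    then have "sp q \<in> Ps d" using sp_P q by blast
    moreover have "f (snd q) < f (fst q)" using q by (simp add: Invs_def)
    ultimately show ?thesis using q by (simp add: Invs_def sp_def)
  next
    assume h: "p \<in> orbp d (a, b) - Invs d f"
    obtain x y where px: "p = (x, y)" by (cases p)
    have pP: "p \<in> Ps d" "s x = y" using S_prop h px by auto
    then have sy: "s y = x" by (metis invol)
    have "x < y" using pP px by (simp add: Ps_def)
    then have "f x \<noteq> f y" using assms by (metis inj_eq less_irrefl)
    then have "f x < f y" using h px pP by (auto simp: Invs_def)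
    then show ?thesis using pP sy px by (simp add: Invs_def)
  qed
qed

lemma NN_step:
  assumes fW: "f \<in> Wgrp d"
  shows "NN d (f \<circ> s) = (if f a < f b then NN d f + 1 else NN d f - 1)"
    and "\<not> f a < f b \<Longrightarrow> NN d f \<ge> 1"
proof -
  let ?S = "orbp d (a, b)"
  let ?I = "Invs d f"
  let ?O = "orbp d ` ?I"
  have po: "perD d f" "oddf f" "bij f" using Wgrp_po[OF fW] by auto
  have injf: "inj f" using po(3) bij_is_inj by blast
  have finO: "finite ?O" using finite_O[OF fW] .
  have E1': "Invs d (f \<circ> s) = sp ` (?I - ?S) \<union> (?S - ?I)" using E1[OF injf] .
  have E3: "orbp d ` (?I - ?S) = ?O - {?S}"
  proof (intro equalityI subsetI)
    fix Ob assume "Ob \<in> orbp d ` (?I - ?S)"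
    then obtain p where p: "p \<in> ?I" "p \<notin> ?S" "Ob = orbp d p" by auto
    have "Ob \<noteq> ?S" using p orb_self[of p d] by auto
    then show "Ob \<in> ?O - {?S}" using p by auto
  next
    fix Ob assume "Ob \<in> ?O - {?S}"
    then obtain p where p: "p \<in> ?I" "Ob = orbp d p" "orbp d p \<noteq> ?S" by auto
    have "p \<notin> ?S" using p orb_trans by blast
    then show "Ob \<in> orbp d ` (?I - ?S)" using p by auto
  qed
  have E4: "orbp d ` (sp ` X) = (\<lambda>Q. sp ` Q) ` (orbp d ` X)" for X
    unfolding image_image by (simp add: sp_orb)
  have injI: "inj (\<lambda>Q. sp ` Q)" by (meson inj_image_eq_iff injI sp_inj)
  have E6: "?S \<notin> (\<lambda>Q. sp ` Q) ` (orbp d ` (?I - ?S))"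
  proof
    assume "?S \<in> (\<lambda>Q. sp ` Q) ` (orbp d ` (?I - ?S))"
    then obtain p where p: "p \<in> ?I" "p \<notin> ?S" "sp ` orbp d p = ?S" by auto
    then have "orbp d (sp p) = ?S" using sp_orb by simp
    then have "sp p \<in> ?S" using orb_self[of "sp p" d] by simp
    moreover have "p \<in> Ps d" using p by (simp add: Invs_def)
    ultimately show False using sp_P p by blast
  qed
  have "a \<noteq> b" using del by auto
  then have fab: "f a \<noteq> f b" using injf by (simp add: inj_eq)
  have abI: "(a, b) \<in> ?I \<longleftrightarrow> f b < f a" using ab_P by (simp add: Invs_def)
  show "NN d (f \<circ> s) = (if f a < f b then NN d f + 1 else NN d f - 1)"
  proof (cases "f a < f b")
    case True
    have disj: "?S \<inter> ?I = {}"
    proof (rule ccontr)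
      assume "?S \<inter> ?I \<noteq> {}"
      then obtain p where p: "p \<in> ?S" "p \<in> ?I" by auto
      have "(a, b) \<in> orbp d p" using orb_sym p(1) .
      then have "(a, b) \<in> ?I" using Invs_orb[OF po(1,2) p(2)] by blast
      then show False using abI True by simp
    qed
    then have "?I - ?S = ?I" "?S - ?I = ?S" by auto
    then have "Invs d (f \<circ> s) = sp ` ?I \<union> ?S" using E1' by simp
    then have "orbp d ` Invs d (f \<circ> s) = (\<lambda>Q. sp ` Q) ` ?O \<union> orbp d ` ?S" by (simp add: E4 image_Un)
    moreover have "orbp d ` ?S = {?S}"
    proof -
      have "orbp d ` ?S \<subseteq> {?S}" using orb_trans by blast
      moreover have "?S \<in> orbp d ` ?S" using orb_self[of "(a,b)" d] by blast
      ultimately show ?thesis by blast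
    qed
    moreover have "?S \<notin> (\<lambda>Q. sp ` Q) ` ?O" using E6 \<open>?I - ?S = ?I\<close> by simp
    ultimately have "orbp d ` Invs d (f \<circ> s) = insert ?S ((\<lambda>Q. sp ` Q) ` ?O)" by simp
    then have "NN d (f \<circ> s) = card ((\<lambda>Q. sp ` Q) ` ?O) + 1"
      using finO \<open>?S \<notin> (\<lambda>Q. sp ` Q) ` ?O\<close> unfolding NN_def by simp
    also have "card ((\<lambda>Q. sp ` Q) ` ?O) = card ?O" using injI by (meson card_image inj_on_subset subset_UNIV)
    finally have "NN d (f \<circ> s) = NN d f + 1" by (simp only: NN_def)
    then show ?thesis using True by simp
  next
    case False
    then have "f b < f a" using fab by linarith
    then have abI': "(a, b) \<in> ?I" using abI by simp
    have sub: "?S \<subseteq> ?I" using Invs_orb[OF po(1,2) abI'] by blast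
    then have "?S - ?I = {}" by auto
    then have "Invs d (f \<circ> s) = sp ` (?I - ?S)" using E1' by (simp only: Un_empty_right)
    then have "orbp d ` Invs d (f \<circ> s) = (\<lambda>Q. sp ` Q) ` (?O - {?S})" using E4 E3 by simp
    then have "NN d (f \<circ> s) = card (?O - {?S})"
      unfolding NN_def using injI by (metis card_image inj_on_subset subset_UNIV)
    also have "\<dots> = card ?O - 1" using abI' finO by (simp add: card_Diff_singleton)
    finally have "NN d (f \<circ> s) = NN d f - 1" by (simp only: NN_def)
    then show ?thesis using False by simp
  qed
  show "\<not> f a < f b \<Longrightarrow> NN d f \<ge> 1"
  proof -
    assume "\<not> f a < f b"
    then have "f b < f a" using fab by linarith
    then have "(a, b) \<in> ?I" using abI by simp
    then have "?O \<noteq> {}" by auto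
    then show "NN d f \<ge> 1" using finO by (simp add: NN_def Suc_le_eq card_gt_0_iff)
  qed
qed

end

definition aa :: "nat \<Rightarrow> nat \<Rightarrow> int" where "aa d j = (if j = 0 then -1 else int j)"
definition bb :: "nat \<Rightarrow> nat \<Rightarrow> int" where
  "bb d j = (if j = 0 then 1 else if j = d then int d + 2 else int j + 1)"

lemma sw_inst: "d \<ge> 2 \<Longrightarrow> j \<le> d \<Longrightarrow> sw d (aa d j) (bb d j)"
  by unfold_locales (auto simp: aa_def bb_def)

lemma dvd_iff0: "- bigD d < z \<Longrightarrow> z < bigD d \<Longrightarrow> (bigD d dvd z \<longleftrightarrow> z = 0)"
  using dvdD[of d z] by (auto simp: bigD_def)

lemma agree_v:
  assumes d2: "d \<ge> 2" and j: "j \<le> d" and k: "1 \<le> k" "k \<le> int d"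
  shows "(if j = 0 then (if k = 1 then -1 else k)
         else if j = d then (if k = int d then int d + 2 else k)
         else (if k = int j then int j + 1 else if k = int j + 1 then int j else k))
       = swf (bigD d) (aa d j) (bb d j) k"
proof -
  consider "j = 0" | "j = d" | "j \<noteq> 0 \<and> j \<noteq> d" by blast
  then show ?thesis
  proof cases
    case 1
    have e: "bigD d dvd (k + 1) \<longleftrightarrow> False" "bigD d dvd (k - 1) \<longleftrightarrow> k = 1"
      using dvd_iff0[of d "k+1"] dvd_iff0[of d "k - 1"] k by (auto simp: bigD_def)
    show ?thesis using 1 d2 by (simp add: swf_def aa_def bb_def e)
  next
    case 2
    have e: "bigD d dvd (k - int d) \<longleftrightarrow> k = int d" "bigD d dvd (k - (int d + 2)) \<longleftrightarrow> False"
      "bigD d dvd (k + int d) \<longleftrightarrow> False"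
      using dvd_iff0[of d "k - int d"] dvd_iff0[of d "k - (int d + 2)"] dvd_iff0[of d "k + int d"] k
      by (auto simp: bigD_def)
    have e2: "bigD d dvd (k + (int d + 2)) \<longleftrightarrow> k = int d"
    proof -
      have eq: "k + (int d + 2) = (k - int d) + bigD d" by (simp add: bigD_def)
      show ?thesis unfolding eq dvd_add_triv_right_iff using e(1) .
    qed
    show ?thesis using 2 d2 by (simp add: swf_def aa_def bb_def e e2)
  next
    case 3
    have jj: "1 \<le> int j" "int j \<le> int d - 1" using 3 j by auto
    have e: "bigD d dvd (k - int j) \<longleftrightarrow> k = int j" "bigD d dvd (k + (int j + 1)) \<longleftrightarrow> False"
      "bigD d dvd (k - (int j + 1)) \<longleftrightarrow> k = int j + 1" "bigD d dvd (k + int j) \<longleftrightarrow> False"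
      using dvd_iff0[of d "k - int j"] dvd_iff0[of d "k + (int j + 1)"] dvd_iff0[of d "k - (int j + 1)"]
        dvd_iff0[of d "k + int j"] k jj
      by (auto simp: bigD_def)
    show ?thesis using 3 d2 by (simp add: swf_def aa_def bb_def e)
  qed
qed

lemma sref_eq: assumes d2: "d \<ge> 2" and j: "j \<le> d"
  shows "sref d j = swf (bigD d) (aa d j) (bb d j)"
proof -
  interpret sw d "aa d j" "bb d j" using sw_inst[OF d2 j] .
  show ?thesis
    unfolding sref_def
    apply (rule per_odd_eq[OF Wext_per Wext_odd s_per s_odd])
    apply (intro allI impI)
    apply (subst Wext_base, simp, simp)
    using agree_v[OF d2 j] by auto
qed

lemma Wgrp_id: "id \<in> Wgrp d" by (simp add: Wgrp_def)

lemma Wgrp_comp: "g \<in> Wgrp d \<Longrightarrow> h \<in> Wgrp d \<Longrightarrow> g \<circ> h \<in> Wgrp d"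
  unfolding Wgrp_def by (auto intro: bij_comp)

lemma Wgrp_inv: assumes "g \<in> Wgrp d" shows "inv g \<in> Wgrp d"
proof -
  have b: "bij g" and p: "\<And>i. g (i + bigD d) = g i + bigD d" and o: "\<And>i. g (- i) = - g i"
    using assms by (auto simp: Wgrp_def)
  have "inv g (y + bigD d) = inv g y + bigD d" for y
  proof -
    have "g (inv g y + bigD d) = y + bigD d" using p b by (simp add: surj_f_inv_f bij_is_surj)
    then show ?thesis using b by (metis bij_inv_eq_iff)
  qed
  moreover have "inv g (- y) = - inv g y" for y
  proof -
    have "g (- inv g y) = - y" using o b by (simp add: surj_f_inv_f bij_is_surj)
    then show ?thesis using b by (metis bij_inv_eq_iff)
  qed
  ultimately show ?thesis using b bij_imp_bij_inv by (auto simp: Wgrp_def)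
qed

lemma sref_W: "d \<ge> 2 \<Longrightarrow> j \<le> d \<Longrightarrow> sref d j \<in> Wgrp d"
  using sref_eq sw.s_Wgrp sw_inst by metis

definition LL :: "nat \<Rightarrow> (int \<Rightarrow> int) \<Rightarrow> nat" where "LL d g = NN d (inv g)"

lemma LL_step:
  assumes d2: "d \<ge> 2" and j: "j \<le> d" and g: "g \<in> Wgrp d"
  shows "LL d (sref d j \<circ> g) = (if inv g (aa d j) < inv g (bb d j) then LL d g + 1 else LL d g - 1)"
    and "\<not> inv g (aa d j) < inv g (bb d j) \<Longrightarrow> LL d g \<ge> 1"
proof -
  interpret sw d "aa d j" "bb d j" using sw_inst[OF d2 j] .
  have bg: "bij g" using g by (simp add: Wgrp_def)
  have e: "inv (s \<circ> g) = inv g \<circ> s"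
    using o_inv_distrib[OF s_bij bg] inv_s by simp
  have fW: "inv g \<in> Wgrp d" using Wgrp_inv[OF g] .
  show "LL d (sref d j \<circ> g) = (if inv g (aa d j) < inv g (bb d j) then LL d g + 1 else LL d g - 1)"
    unfolding sref_eq[OF d2 j] LL_def e using NN_step(1)[OF fW] .
  show "\<not> inv g (aa d j) < inv g (bb d j) \<Longrightarrow> LL d g \<ge> 1"
    unfolding LL_def using NN_step(2)[OF fW] .
qed

lemma wordprod_Nil[simp]: "wordprod d [] = id" by (simp add: wordprod_def)
lemma wordprod_Cons[simp]: "wordprod d (j # ws) = sref d j \<circ> wordprod d ws" by (simp add: wordprod_def)
lemma wordprod_append: "wordprod d (ws @ vs) = wordprod d ws \<circ> wordprod d vs"
  by (induction ws) (auto simp: comp_assoc)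

lemma word_W: "d \<ge> 2 \<Longrightarrow> set ws \<subseteq> {0..d} \<Longrightarrow> wordprod d ws \<in> Wgrp d"
  by (induction ws) (auto intro: Wgrp_comp sref_W Wgrp_id)

lemma LL_id: "LL d id = 0"
proof -
  have "Invs d id = {}" unfolding Invs_def Ps_def by force
  then show ?thesis by (simp add: LL_def NN_def inv_id)
qed

lemma LL_id': "LL d (\<lambda>x. x) = 0" using LL_id unfolding id_def .

lemma LL_le: "d \<ge> 2 \<Longrightarrow> set ws \<subseteq> {0..d} \<Longrightarrow> LL d (wordprod d ws) \<le> length ws"
proof (induction ws)
  case Nil then show ?case using LL_id LL_id' by simp
next
  case (Cons j ws)
  then have "LL d (wordprod d ws) \<le> length ws" "j \<le> d" "wordprod d ws \<in> Wgrp d"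
    using word_W by auto
  then have st: "LL d (sref d j \<circ> wordprod d ws) \<le> LL d (wordprod d ws) + 1"
    using LL_step(1)[OF Cons.prems(1) \<open>j \<le> d\<close> \<open>wordprod d ws \<in> Wgrp d\<close>] by (simp split: if_splits)
  have "LL d (wordprod d (j # ws)) = LL d (sref d j \<circ> wordprod d ws)" by (simp only: wordprod_Cons)
  also have "\<dots> \<le> length (j # ws)" using st \<open>LL d (wordprod d ws) \<le> length ws\<close> by simp
  finally show ?case .
qed

lemma no_descent_id:
  assumes d2: "d \<ge> 2" and f: "f \<in> Wgrp d" and asc: "\<forall>j \<le> d. f (aa d j) < f (bb d j)"
  shows "f = id"
proof -
  have po: "perD d f" "oddf f" using Wgrp_po[OF f] by auto
  have f1: "f 1 > 0"
  proof -
    have "f (-1) < f 1" using asc[rule_format, of 0] by (simp add: aa_def bb_def)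
    moreover have "f (-1) = - f 1" using po(2) by (simp add: oddf_def)
    ultimately show ?thesis by simp
  qed
  have fmid: "f (int i) < f (int i + 1)" if "1 \<le> i" "i \<le> d - 1" for i
  proof -
    have "i \<noteq> d" "i \<le> d" "i \<noteq> 0" using that d2 by auto
    then show ?thesis using asc[rule_format, of i] by (simp add: aa_def bb_def)
  qed
  have fd: "f (int d) \<le> int d"
  proof -
    have "f (int d) < f (int d + 2)" using asc[rule_format, of d] d2 by (simp add: aa_def bb_def)
    moreover have "f (int d + 2) = bigD d - f (int d)"
      using po_refl[OF po, of "int d"] by (simp add: bigD_def algebra_simps)
    ultimately show ?thesis by (simp add: bigD_def)
  qed
  have lo: "f (int i) \<ge> int i" if "1 \<le> i" "i \<le> d" for i
    using that
  proof (induction i)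
    case 0 then show ?case by simp
  next
    case (Suc i)
    show ?case
    proof (cases "i = 0")
      case True then show ?thesis using f1 by simp
    next
      case False
      then have "f (int i) \<ge> int i" using Suc by simp
      moreover have "f (int i) < f (int i + 1)" using fmid[of i] False Suc.prems by simp
      moreover have "int (Suc i) = int i + 1" by simp
      ultimately show ?thesis by (metis add_le_cancel_right zless_imp_add1_zle order_trans)
    qed
  qed
  have hi: "f (int (d - m)) \<le> int (d - m)" if "m \<le> d - 1" for m
    using that
  proof (induction m)
    case 0 then show ?case using fd by simp
  next
    case (Suc m)
    then have "f (int (d - m)) \<le> int (d - m)" by simp
    moreover have "f (int (d - Suc m)) < f (int (d - Suc m) + 1)"
      using fmid[of "d - Suc m"] Suc.prems by simp
    moreover have "int (d - Suc m) + 1 = int (d - m)" using Suc.prems by simp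
    ultimately show ?case by simp
  qed
  have "\<forall>k. 1 \<le> k \<and> k \<le> int d \<longrightarrow> f k = id k"
  proof (intro allI impI)
    fix k :: int assume k: "1 \<le> k \<and> k \<le> int d"
    define i where "i = nat k"
    have i: "k = int i" "1 \<le> i" "i \<le> d" using k by (auto simp: i_def)
    have "f k \<ge> k" using lo i by simp
    moreover have "f k \<le> k" using hi[of "d - i"] i by simp
    ultimately show "f k = id k" by simp
  qed
  then show ?thesis using per_odd_eq[OF po, of id] by (simp add: perD_def oddf_def)
qed

lemma word_exists:
  assumes d2: "d \<ge> 2"
  shows "g \<in> Wgrp d \<Longrightarrow> \<exists>ws. set ws \<subseteq> {0..d} \<and> length ws = LL d g \<and> wordprod d ws = g"
proof (induction "LL d g" arbitrary: g rule: less_induct)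
  case less
  show ?case
  proof (cases "g = id")
    case True then show ?thesis by (intro exI[of _ "[]"]) (simp add: LL_id)
  next
    case False
    have bg: "bij g" using less.prems by (simp add: Wgrp_def)
    have "inv g \<noteq> id"
    proof
      assume "inv g = id"
      then have "inv (inv g) = id" by (simp add: inv_id)
      then show False using inv_inv_eq[OF bg] False by simp
    qed
    then obtain j where j: "j \<le> d" "\<not> inv g (aa d j) < inv g (bb d j)"
      using no_descent_id[OF d2 Wgrp_inv[OF less.prems]] by blast
    have L: "LL d (sref d j \<circ> g) = LL d g - 1" "LL d g \<ge> 1"
      using LL_step[OF d2 j(1) less.prems] j(2) by auto
    have hW: "sref d j \<circ> g \<in> Wgrp d" using Wgrp_comp sref_W[OF d2 j(1)] less.prems by blast
    obtain ws where ws: "set ws \<subseteq> {0..d}" "length ws = LL d (sref d j \<circ> g)" "wordprod d ws = sref d j \<circ> g"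
      using less.hyps[OF _ hW] L by auto
    have "sref d j \<circ> (sref d j \<circ> g) = g"
      using sref_eq[OF d2 j(1)] sw.s_comp[OF sw_inst[OF d2 j(1)]] by (simp add: comp_assoc[symmetric])
    then show ?thesis using ws j L by (intro exI[of _ "j # ws"]) auto
  qed
qed

lemma coxlen_LL: assumes d2: "d \<ge> 2" and g: "g \<in> Wgrp d" shows "coxlen d g = LL d g"
  unfolding coxlen_def
proof (rule Least_equality)
  show "\<exists>ws. length ws = LL d g \<and> set ws \<subseteq> {0..d} \<and> wordprod d ws = g"
    using word_exists[OF d2 g] by blast
next
  fix k assume "\<exists>ws. length ws = k \<and> set ws \<subseteq> {0..d} \<and> wordprod d ws = g"
  then show "LL d g \<le> k" using LL_le[OF d2] by blast
qed

lemma lam0_0[simp]: "lam0 lam 0 = lam 0" by (simp add: lam0_def)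
lemma lam0_Suc: "lam0 lam (Suc i) = lam0 lam i + lam (Suc i)" by (simp add: lam0_def)
lemma lam0_mono: "i \<le> k \<Longrightarrow> lam0 lam i \<le> lam0 lam k"
  unfolding lam0_def by (rule sum_mono2) auto
lemma lam0_last: "(\<Sum>i\<le>r + 1. lam i) = d \<Longrightarrow> lam0 lam r + lam (r + 1) = d"
  by (simp add: lam0_def)

lemma Jmem: "j \<in> {0..d} - {lam0 lam i |i. i \<le> r} \<longleftrightarrow> j \<le> d \<and> (\<forall>i \<le> r. j \<noteq> lam0 lam i)"
  by auto

lemma op_chain:
  assumes "\<And>x. lo \<le> x \<Longrightarrow> x < hi \<Longrightarrow> f x < f (x + 1)"
  shows "order_pres_on f {lo..hi}"
  unfolding order_pres_on_def
proof (intro ballI impI)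
  fix x y :: int assume x: "x \<in> {lo..hi}" and y: "y \<in> {lo..hi}" and xy: "x < y"
  have "\<forall>y. x < y \<and> y \<le> hi \<longrightarrow> f x < f y" if "lo \<le> x" for x
  proof -
    have "f x < f (x + int (Suc n))" if "x + int (Suc n) \<le> hi" for n
      using that
    proof (induction n)
      case 0 then show ?case using assms[of x] \<open>lo \<le> x\<close> by simp
    next
      case (Suc n)
      then have "f x < f (x + int (Suc n))" by simp
      moreover have "f (x + int (Suc n)) < f (x + int (Suc n) + 1)"
        using assms[of "x + int (Suc n)"] Suc.prems \<open>lo \<le> x\<close> by simp
      moreover have "f (x + int (Suc (Suc n))) = f (x + int (Suc n) + 1)" by (simp add: algebra_simps)
      ultimately show ?case by linarith
    qed
    note H = this
    show ?thesis
    proof (intro allI impI)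
      fix y assume y: "x < y \<and> y \<le> hi"
      define n where "n = nat (y - x - 1)"
      have "x + int (Suc n) = y" using y by (simp add: n_def)
      then show "f x < f y" using H[of n] y by simp
    qed
  qed
  then show "f x < f y" using x y xy by auto
qed

lemma asc_op:
  assumes d2: "d \<ge> 2" and S: "(\<Sum>i\<le>r + 1. lam i) = d" and f: "f \<in> Wgrp d"
    and asc: "\<And>j. j \<le> d \<Longrightarrow> (\<forall>i \<le> r. j \<noteq> lam0 lam i) \<Longrightarrow> f (aa d j) < f (bb d j)"
    and k: "k \<le> r + 1"
  shows "order_pres_on f (Rbase r d lam k)"
proof -
  have po: "perD d f" "oddf f" using Wgrp_po[OF f] by auto
  have neg: "f (- z) = - f z" for z using po(2) by (simp add: oddf_def)
  have mir: "f (bigD d - z) = bigD d - f z" for z using po_refl[OF po] .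
  have f0: "f 0 = 0" using po_zero[OF po(2)] .
  have fm: "f (int d + 1) = int d + 1" using po_mid[OF po] .
  have last: "lam0 lam r + lam (r + 1) = d" using lam0_last[OF S] .
  have lamle: "lam0 lam i \<le> lam0 lam r" if "i \<le> r" for i using lam0_mono that by blast
  have ge0: "lam 0 \<le> lam0 lam i" for i using lam0_mono[of 0 i lam] by simp
  have A0: "f 0 < f 1" if "lam 0 \<ge> 1"
  proof -
    have "0 \<le> d" by simp
    moreover have "\<forall>i \<le> r. (0::nat) \<noteq> lam0 lam i" using ge0 that by (metis not_one_le_zero order_trans)
    ultimately have "f (-1) < f 1" using asc[of 0] by (simp add: aa_def bb_def)
    then show ?thesis using neg[of 1] f0 by simp
  qed
  have Am: "f (int x) < f (int x + 1)" if "1 \<le> x" "x \<le> d - 1" "\<forall>i \<le> r. x \<noteq> lam0 lam i" for x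
  proof -
    have "x \<noteq> 0" "x \<noteq> d" "x \<le> d" using that d2 by auto
    then show ?thesis using asc[of x] that by (simp add: aa_def bb_def)
  qed
  have Ad: "f (int d) < f (int d + 1)" if "\<forall>i \<le> r. d \<noteq> lam0 lam i"
  proof -
    have "f (int d) < f (int d + 2)" using asc[of d] that d2 by (simp add: aa_def bb_def)
    moreover have "f (int d + 2) = bigD d - f (int d)" using mir[of "int d"] by (simp add: bigD_def algebra_simps)
    ultimately show ?thesis using fm by (simp add: bigD_def)
  qed
  consider "k = 0" | "1 \<le> k \<and> k \<le> r" | "k = r + 1" using k by linarith
  then show ?thesis
  proof cases
    case 1
    have pos: "f y < f (y + 1)" if "0 \<le> y" "y < int (lam 0)" for y
    proof (cases "y = 0")
      case True then show ?thesis using A0 that by simp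
    next
      case False
      define x where "x = nat y"
      have x: "y = int x" "1 \<le> x" "x < lam 0" using that False by (auto simp: x_def)
      have "lam 0 \<le> d" using last ge0[of r] by simp
      moreover have "\<forall>i \<le> r. x \<noteq> lam0 lam i" using ge0 x by (metis not_le)
      ultimately show ?thesis using Am[of x] x by simp
    qed
    show ?thesis unfolding 1 Rbase_def
    proof (simp, rule op_chain)
      fix x assume "- int (lam 0) \<le> x" "x < int (lam 0)"
      show "f x < f (x + 1)"
      proof (cases "x \<ge> 0")
        case True then show ?thesis using pos \<open>x < int (lam 0)\<close> by simp
      next
        case False
        have "f (- x - 1) < f (- x - 1 + 1)" using pos[of "- x - 1"] False \<open>- int (lam 0) \<le> x\<close> by simp
        moreover have "f (- x - 1) = - f (x + 1)"
        proof -
          have "- x - 1 = - (x + 1)" by simp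
          then show ?thesis using neg by metis
        qed
        ultimately show ?thesis using neg[of x] by simp
      qed
    qed
  next
    case 2
    have Rb: "Rbase r d lam k = {int (lam0 lam (k - 1)) + 1 .. int (lam0 lam k)}" using 2 by (simp add: Rbase_def)
    show ?thesis unfolding Rb
    proof (rule op_chain)
      fix y assume y: "int (lam0 lam (k - 1)) + 1 \<le> y" "y < int (lam0 lam k)"
      define x where "x = nat y"
      have x: "y = int x" "lam0 lam (k - 1) < x" "x < lam0 lam k" using y by (auto simp: x_def)
      have "lam0 lam k \<le> d" using lamle[of k] 2 last by simp
      then have xb: "1 \<le> x" "x \<le> d - 1" using x by auto
      have "\<forall>i \<le> r. x \<noteq> lam0 lam i"
      proof (intro allI impI)
        fix i assume "i \<le> r"
        show "x \<noteq> lam0 lam i"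
        proof (cases "i \<le> k - 1")
          case True then show ?thesis using lam0_mono[OF True, of lam] x by simp
        next
          case False then have "k \<le> i" by simp
          then show ?thesis using lam0_mono[of k i lam] x by simp
        qed
      qed
      then show "f y < f (y + 1)" using Am[OF xb] x by simp
    qed
  next
    case 3
    have Rb: "Rbase r d lam k = {int d + 1 - int (lam (r + 1)) .. int d + 1 + int (lam (r + 1))}"
      using 3 by (simp add: Rbase_def)
    have low: "f y < f (y + 1)" if y: "int d + 1 - int (lam (r + 1)) \<le> y" "y \<le> int d" for y
    proof -
      define x where "x = nat y"
      have lamr: "lam (r+1) \<ge> 1" using y by simp
      have x: "y = int x" "lam0 lam r < x" "x \<le> d" using y last by (auto simp: x_def)
      have nJ: "\<forall>i \<le> r. x \<noteq> lam0 lam i" using lamle x by (metis not_le)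
      show ?thesis
      proof (cases "x = d")
        case True then show ?thesis using Ad nJ x by simp
      next
        case False
        have "1 \<le> x" using x by simp
        then show ?thesis using Am[of x] nJ x False by simp
      qed
    qed
    show ?thesis unfolding Rb
    proof (rule op_chain)
      fix y assume y: "int d + 1 - int (lam (r + 1)) \<le> y" "y < int d + 1 + int (lam (r + 1))"
      show "f y < f (y + 1)"
      proof (cases "y \<le> int d")
        case True then show ?thesis using low y by simp
      next
        case False
        define z where "z = bigD d - y - 1"
        have z: "int d + 1 - int (lam (r + 1)) \<le> z" "z \<le> int d" using y False by (auto simp: z_def bigD_def)
        have "f z < f (z + 1)" using low z by simp
        moreover have "f y = bigD d - f (z + 1)" using mir[of "z + 1"] by (simp add: z_def)
        moreover have "f (y + 1) = bigD d - f z" using mir[of z] by (simp add: z_def)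
        ultimately show ?thesis by simp
      qed
    qed
  qed
qed

lemma Rset_base: "k \<le> r + 1 \<Longrightarrow> Rset r d lam (int k) = Rbase r d lam k"
proof -
  assume k: "k \<le> r + 1"
  have "int k div (2 * int r + 2) = 0" "int k mod (2 * int r + 2) = int k" using k by auto
  then show ?thesis using k by (simp add: Rset_def Let_def)
qed

lemma Rset_cases:
  assumes "x \<in> Rset r d lam i"
  obtains k q y where "k \<le> r + 1" "y \<in> Rbase r d lam k" "x = y + q * bigD d"
    | k q y where "k \<le> r + 1" "y \<in> Rbase r d lam k" "x = - y + q * bigD d"
proof -
  let ?n = "2 * int r + 2"
  let ?q = "i div ?n" and ?m = "i mod ?n"
  have m: "0 \<le> ?m" "?m < ?n" by auto
  show ?thesis
  proof (cases "?m \<le> int r + 1")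
    case True
    then have "x \<in> (\<lambda>x. x + ?q * bigD d) ` Rbase r d lam (nat ?m)" using assms by (simp add: Rset_def Let_def)
    moreover have "nat ?m \<le> r + 1" using True m by simp
    ultimately show ?thesis using that(1) by blast
  next
    case False
    then have "x \<in> (\<lambda>x. - x + (?q + 1) * bigD d) ` Rbase r d lam (nat (?n - ?m))" using assms by (simp add: Rset_def Let_def)
    moreover have "nat (?n - ?m) \<le> r + 1" using False m by simp
    ultimately show ?thesis using that(2) by blast
  qed
qed

lemma Rset_intro:
  assumes "x \<in> Rset r d lam i"
  shows "(\<exists>k q. k \<le> r + 1 \<and> Rset r d lam i = (\<lambda>x. x + q * bigD d) ` Rbase r d lam k)
       \<or> (\<exists>k q. k \<le> r + 1 \<and> Rset r d lam i = (\<lambda>x. - x + q * bigD d) ` Rbase r d lam k)"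
proof -
  let ?n = "2 * int r + 2"
  let ?q = "i div ?n" and ?m = "i mod ?n"
  have m: "0 \<le> ?m" "?m < ?n" by auto
  show ?thesis
  proof (cases "?m \<le> int r + 1")
    case True
    then have "Rset r d lam i = (\<lambda>x. x + ?q * bigD d) ` Rbase r d lam (nat ?m)" by (simp add: Rset_def Let_def)
    moreover have "nat ?m \<le> r + 1" using True m by simp
    ultimately show ?thesis by blast
  next
    case False
    then have "Rset r d lam i = (\<lambda>x. - x + (?q + 1) * bigD d) ` Rbase r d lam (nat (?n - ?m))" by (simp add: Rset_def Let_def)
    moreover have "nat (?n - ?m) \<le> r + 1" using False m by simp
    ultimately show ?thesis by blast
  qed
qed

lemma po_negshift: "perD d f \<Longrightarrow> oddf f \<Longrightarrow> f (- y + q * bigD d) = - f y + q * bigD d"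
  using perD_mult[of d f "- y" q] by (simp add: oddf_def)

lemma op_Rset:
  assumes po: "perD d f" "oddf f" and opb: "\<And>k. k \<le> r + 1 \<Longrightarrow> order_pres_on f (Rbase r d lam k)"
  shows "order_pres_on f (Rset r d lam i)"
proof (cases "Rset r d lam i = {}")
  case True then show ?thesis by (simp add: order_pres_on_def)
next
  case False
  then obtain x0 where "x0 \<in> Rset r d lam i" by blast
  from Rset_intro[OF this] show ?thesis
  proof
    assume "\<exists>k q. k \<le> r + 1 \<and> Rset r d lam i = (\<lambda>x. x + q * bigD d) ` Rbase r d lam k"
    then obtain k q where k: "k \<le> r + 1" and R: "Rset r d lam i = (\<lambda>x. x + q * bigD d) ` Rbase r d lam k" by blast
    show ?thesis unfolding R order_pres_on_def
    proof (intro ballI impI)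
      fix u v assume u: "u \<in> (\<lambda>x. x + q * bigD d) ` Rbase r d lam k" and v: "v \<in> (\<lambda>x. x + q * bigD d) ` Rbase r d lam k" and uv: "u < v"
      obtain x y where xy: "x \<in> Rbase r d lam k" "y \<in> Rbase r d lam k" "u = x + q * bigD d" "v = y + q * bigD d" using u v by blast
      have "f x < f y" using opb[OF k] xy uv unfolding order_pres_on_def by auto
      then show "f u < f v" using xy perD_mult[OF po(1)] by simp
    qed
  next
    assume "\<exists>k q. k \<le> r + 1 \<and> Rset r d lam i = (\<lambda>x. - x + q * bigD d) ` Rbase r d lam k"
    then obtain k q where k: "k \<le> r + 1" and R: "Rset r d lam i = (\<lambda>x. - x + q * bigD d) ` Rbase r d lam k" by blast
    show ?thesis unfolding R order_pres_on_def
    proof (intro ballI impI)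
      fix u v assume u: "u \<in> (\<lambda>x. - x + q * bigD d) ` Rbase r d lam k" and v: "v \<in> (\<lambda>x. - x + q * bigD d) ` Rbase r d lam k" and uv: "u < v"
      obtain x y where xy: "x \<in> Rbase r d lam k" "y \<in> Rbase r d lam k" "u = - x + q * bigD d" "v = - y + q * bigD d" using u v by blast
      have "f y < f x" using opb[OF k] xy uv unfolding order_pres_on_def by auto
      then show "f u < f v" using xy po_negshift[OF po] by simp
    qed
  qed
qed

lemma Rset_pres:
  assumes po: "perD d s" "oddf s" and pb: "\<And>k y. k \<le> r + 1 \<Longrightarrow> y \<in> Rbase r d lam k \<Longrightarrow> s y \<in> Rbase r d lam k"
    and x: "x \<in> Rset r d lam i"
  shows "s x \<in> Rset r d lam i"
  using Rset_intro[OF x]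
proof
  assume "\<exists>k q. k \<le> r + 1 \<and> Rset r d lam i = (\<lambda>x. x + q * bigD d) ` Rbase r d lam k"
  then obtain k q where k: "k \<le> r + 1" and R: "Rset r d lam i = (\<lambda>x. x + q * bigD d) ` Rbase r d lam k" by blast
  obtain y where y: "y \<in> Rbase r d lam k" "x = y + q * bigD d" using x R by blast
  have "s x = s y + q * bigD d" using y perD_mult[OF po(1)] by simp
  then show ?thesis unfolding R using pb[OF k y(1)] by blast
next
  assume "\<exists>k q. k \<le> r + 1 \<and> Rset r d lam i = (\<lambda>x. - x + q * bigD d) ` Rbase r d lam k"
  then obtain k q where k: "k \<le> r + 1" and R: "Rset r d lam i = (\<lambda>x. - x + q * bigD d) ` Rbase r d lam k" by blast
  obtain y where y: "y \<in> Rbase r d lam k" "x = - y + q * bigD d" using x R by blast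
  have "s x = - s y + q * bigD d" using y po_negshift[OF po] by simp
  then show ?thesis unfolding R using pb[OF k y(1)] by blast
qed

context sw begin

lemma blk:
  assumes h: "\<And>p. U p \<Longrightarrow> \<not> (p \<le> hi \<and> hi < p + (b - a)) \<and> \<not> (p < lo \<and> lo \<le> p + (b - a))"
    and y: "y \<in> {lo..hi}"
  shows "s y \<in> {lo..hi}"
proof -
  consider "U y" | "Dn y" | "\<not> U y \<and> \<not> Dn y" by blast
  then show ?thesis
  proof cases
    case 1 then show ?thesis using s_U[OF 1] h[OF 1] y del by auto
  next
    case 2
    have "U (y - (b - a))" using Dn_shift[OF 2] .
    from h[OF this] show ?thesis using s_Dn[OF 2] y del by auto
  next
    case 3 then show ?thesis using y by (simp add: swf_def)
  qed
qed

end

lemma blk_mid0: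
  fixes p L j d :: int
  assumes "1 \<le> j" "j \<le> d - 1" "0 \<le> L" "L \<le> d" "j \<noteq> L"
    and w: "(p - j \<le> -2 * (2 * d + 2) \<or> p - j = -(2 * d + 2) \<or> p - j = 0 \<or> p - j = 2 * d + 2 \<or> p - j \<ge> 2 * (2 * d + 2))
     \<or> (p + (j + 1) \<le> -2 * (2 * d + 2) \<or> p + (j + 1) = -(2 * d + 2) \<or> p + (j + 1) = 0 \<or> p + (j + 1) = 2 * d + 2 \<or> p + (j + 1) \<ge> 2 * (2 * d + 2))"
  shows "\<not> (p \<le> L \<and> L < p + 1) \<and> \<not> (p < - L \<and> - L \<le> p + 1)"
  using assms by auto

lemma sref_Rbase:
  assumes d2: "d \<ge> 2" and S: "(\<Sum>i\<le>r + 1. lam i) = d" and j: "j \<le> d"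
    and jJ: "\<forall>i \<le> r. j \<noteq> lam0 lam i" and k: "k \<le> r + 1" and y: "y \<in> Rbase r d lam k"
  shows "sref d j y \<in> Rbase r d lam k"
proof -
  interpret sw d "aa d j" "bb d j" using sw_inst[OF d2 j] .
  have last: "lam0 lam r + lam (r + 1) = d" using lam0_last[OF S] .
  have lamle: "lam0 lam i \<le> lam0 lam r" if "i \<le> r" for i using lam0_mono that by blast
  have ge0: "lam 0 \<le> lam0 lam i" for i using lam0_mono[of 0 i lam] by simp
  obtain lo hi where R: "Rbase r d lam k = {lo..hi}" and
    LH: "(k = 0 \<and> lo = - int (lam 0) \<and> hi = int (lam 0))
       \<or> (1 \<le> k \<and> k \<le> r \<and> lo = int (lam0 lam (k - 1)) + 1 \<and> hi = int (lam0 lam k))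
       \<or> (k = r + 1 \<and> lo = int d + 1 - int (lam (r + 1)) \<and> hi = int d + 1 + int (lam (r + 1)))"
  proof -
    consider "k = 0" | "1 \<le> k \<and> k \<le> r" | "k = r + 1" using k by linarith
    then show ?thesis
    proof cases
      case 1 then show ?thesis using that[of "- int (lam 0)" "int (lam 0)"] by (simp add: Rbase_def)
    next
      case 2 then show ?thesis using that[of "int (lam0 lam (k - 1)) + 1" "int (lam0 lam k)"] by (simp add: Rbase_def)
    next
      case 3 then show ?thesis using that[of "int d + 1 - int (lam (r + 1))" "int d + 1 + int (lam (r + 1))"] by (simp add: Rbase_def)
    qed
  qed
  have jt: "j = 0 \<or> j = d \<or> (1 \<le> j \<and> j \<le> d - 1)" using j by auto
  have f1: "lam 0 \<le> lam0 lam r" "lam0 lam r \<le> d" using ge0 last by auto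
  have f2: "1 \<le> k \<Longrightarrow> k \<le> r \<Longrightarrow> lam0 lam (k - 1) \<le> lam0 lam k \<and> lam0 lam k \<le> lam0 lam r \<and> lam 0 \<le> lam0 lam (k - 1)
     \<and> j \<noteq> lam0 lam (k - 1) \<and> j \<noteq> lam0 lam k"
    using lam0_mono[of "k - 1" k lam] lamle[of k] ge0[of "k - 1"] jJ[rule_format, of k] jJ[rule_format, of "k - 1"] by auto
  have f3: "j \<noteq> lam 0" "j \<noteq> lam0 lam r" using jJ[rule_format, of 0] jJ[rule_format, of r] by auto
  have h: "\<not> (p \<le> hi \<and> hi < p + (bb d j - aa d j)) \<and> \<not> (p < lo \<and> lo \<le> p + (bb d j - aa d j))"
    if U: "U p" for p
  proof -
    have W: "(p - aa d j \<le> -2 * (2 * int d + 2) \<or> p - aa d j = -(2 * int d + 2) \<or> p - aa d j = 0 \<or> p - aa d j = 2 * int d + 2 \<or> p - aa d j \<ge> 2 * (2 * int d + 2))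
     \<or> (p + bb d j \<le> -2 * (2 * int d + 2) \<or> p + bb d j = -(2 * int d + 2) \<or> p + bb d j = 0 \<or> p + bb d j = 2 * int d + 2 \<or> p + bb d j \<ge> 2 * (2 * int d + 2))"
      using U dvdD[of d "p - aa d j"] dvdD[of d "p + bb d j"] by argo
    from jt consider "j = 0" | "j = d" | "1 \<le> j \<and> j \<le> d - 1" by blast
    then show ?thesis
    proof cases
      case 1
      have ab: "aa d j = -1" "bb d j = 1" using 1 by (simp_all add: aa_def bb_def)
      have l0: "lam 0 \<ge> 1" using f3 1 by simp
      from LH consider "k = 0 \<and> lo = - int (lam 0) \<and> hi = int (lam 0)"
        | "1 \<le> k \<and> k \<le> r \<and> lo = int (lam0 lam (k - 1)) + 1 \<and> hi = int (lam0 lam k)"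
        | "k = r + 1 \<and> lo = int d + 1 - int (lam (r + 1)) \<and> hi = int d + 1 + int (lam (r + 1))" by blast
      then show ?thesis
      proof cases
        case 1 then show ?thesis using W ab l0 f1 by auto
      next
        case 2 then show ?thesis using W ab l0 f1 f2[of] by auto
      next
        case 3 then show ?thesis using W ab l0 f1 last by auto
      qed
    next
      case 2
      have ab: "aa d j = int d" "bb d j = int d + 2" using 2 d2 by (simp_all add: aa_def bb_def)
      have lr: "lam0 lam r < d" using f3 2 f1 by simp
      from LH consider "k = 0 \<and> lo = - int (lam 0) \<and> hi = int (lam 0)"
        | "1 \<le> k \<and> k \<le> r \<and> lo = int (lam0 lam (k - 1)) + 1 \<and> hi = int (lam0 lam k)"
        | "k = r + 1 \<and> lo = int d + 1 - int (lam (r + 1)) \<and> hi = int d + 1 + int (lam (r + 1))" by blast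
      then show ?thesis
      proof cases
        case 1 then show ?thesis using W ab lr f1 by auto
      next
        case 2 then show ?thesis using W ab lr f1 f2 by auto
      next
        case 3 then show ?thesis using W ab lr f1 last by auto
      qed
    next
      case 3
      have "j \<noteq> 0" "j \<noteq> d" using 3 d2 by auto
      then have ab: "aa d j = int j" "bb d j = int j + 1" by (simp_all add: aa_def bb_def)
      from LH consider "k = 0 \<and> lo = - int (lam 0) \<and> hi = int (lam 0)"
        | "1 \<le> k \<and> k \<le> r \<and> lo = int (lam0 lam (k - 1)) + 1 \<and> hi = int (lam0 lam k)"
        | "k = r + 1 \<and> lo = int d + 1 - int (lam (r + 1)) \<and> hi = int d + 1 + int (lam (r + 1))" by blast
      then show ?thesis
      proof cases
        case 1 then show ?thesis using W ab 3 f1 f3 by auto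
      next
        case 2 then show ?thesis using W ab 3 f1 f2 by auto
      next
        case 3 then show ?thesis using W ab \<open>1 \<le> j \<and> j \<le> d - 1\<close> f1 f3 last by auto
      qed
    qed
  qed
  have "s y \<in> {lo..hi}" using blk[OF h] y R by blast
  then show ?thesis using sref_eq[OF d2 j] R by simp
qed

lemma sref_Rset:
  assumes d2: "d \<ge> 2" and S: "(\<Sum>i\<le>r + 1. lam i) = d" and j: "j \<le> d"
    and jJ: "\<forall>i \<le> r. j \<noteq> lam0 lam i" and x: "x \<in> Rset r d lam i"
  shows "sref d j x \<in> Rset r d lam i"
proof -
  have po: "perD d (sref d j)" "oddf (sref d j)" using Wgrp_po[OF sref_W[OF d2 j]] by auto
  show ?thesis using Rset_pres[OF po _ x] sref_Rbase[OF d2 S j jJ] by blast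
qed

lemma word_Rset:
  assumes d2: "d \<ge> 2" and S: "(\<Sum>i\<le>r + 1. lam i) = d"
  shows "set ws \<subseteq> {0..d} - {lam0 lam i |i. i \<le> r} \<Longrightarrow> x \<in> Rset r d lam i \<Longrightarrow> wordprod d ws x \<in> Rset r d lam i"
proof (induction ws arbitrary: x)
  case Nil then show ?case by simp
next
  case (Cons j ws)
  then have jJ: "j \<le> d" "\<forall>i \<le> r. j \<noteq> lam0 lam i" by auto
  have "wordprod d ws x \<in> Rset r d lam i" using Cons by simp
  then show ?case using sref_Rset[OF d2 S jJ] by simp
qed

lemma sref_invol: "d \<ge> 2 \<Longrightarrow> j \<le> d \<Longrightarrow> sref d j (sref d j x) = x"
  using sref_eq sw.invol sw_inst by metis

lemma word_inv_comp:
  assumes d2: "d \<ge> 2"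
  shows "set ws \<subseteq> {0..d} \<Longrightarrow> (\<forall>x. wordprod d ws (wordprod d (rev ws) x) = x) \<and> (\<forall>x. wordprod d (rev ws) (wordprod d ws x) = x)"
proof (induction ws)
  case Nil then show ?case by simp
next
  case (Cons j ws)
  then have j: "j \<le> d" and IH: "\<forall>x. wordprod d ws (wordprod d (rev ws) x) = x" "\<forall>x. wordprod d (rev ws) (wordprod d ws x) = x" by auto
  have e: "wordprod d (rev (j # ws)) = wordprod d (rev ws) \<circ> sref d j" by (simp add: wordprod_append)
  show ?case unfolding e using IH sref_invol[OF d2 j] by simp
qed

lemma word_inv:
  assumes d2: "d \<ge> 2" and ws: "set ws \<subseteq> {0..d}"
  shows "inv (wordprod d ws) = wordprod d (rev ws)"
  using word_inv_comp[OF d2 ws] by (intro inv_unique_comp) (auto simp: fun_eq_iff)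

lemma pair_block:
  assumes d2: "d \<ge> 2" and S: "(\<Sum>i\<le>r + 1. lam i) = d" and j: "j \<le> d"
    and jJ: "\<forall>i \<le> r. j \<noteq> lam0 lam i"
  shows "\<exists>k \<le> r + 1. aa d j \<in> Rbase r d lam k \<and> bb d j \<in> Rbase r d lam k"
proof -
  have last: "lam0 lam r + lam (r + 1) = d" using lam0_last[OF S] .
  have ge0: "lam 0 \<le> lam0 lam i" for i using lam0_mono[of 0 i lam] by simp
  have f3: "j \<noteq> lam 0" "j \<noteq> lam0 lam r" using jJ[rule_format, of 0] jJ[rule_format, of r] by auto
  consider "j = 0" | "j = d" | "1 \<le> j \<and> j \<le> d - 1" using j by linarith
  then show ?thesis
  proof cases
    case 1
    then have "lam 0 \<ge> 1" using f3 by simp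
    then show ?thesis using 1 by (intro exI[of _ 0]) (simp add: aa_def bb_def Rbase_def)
  next
    case 2
    then have "lam (r + 1) \<ge> 1" using f3 last by simp
    then show ?thesis using 2 d2 by (intro exI[of _ "r + 1"]) (simp add: aa_def bb_def Rbase_def)
  next
    case 3
    have "j \<noteq> 0" "j \<noteq> d" using 3 d2 by auto
    then have ab: "aa d j = int j" "bb d j = int j + 1" by (simp_all add: aa_def bb_def)
    show ?thesis
    proof (cases "j + 1 \<le> lam 0")
      case True then show ?thesis unfolding ab by (intro exI[of _ 0]) (simp add: Rbase_def)
    next
      case False
      show ?thesis
      proof (cases "lam0 lam r < j")
        case True
        have jd: "j < d" using \<open>j \<noteq> d\<close> j by simp
        show ?thesis unfolding ab using last jd \<open>lam0 lam r < j\<close> by (intro exI[of _ "r + 1"]) (simp add: Rbase_def)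
      next
        case False2: False
        have lj: "lam 0 < j" using False f3 by simp
        have jr: "j < lam0 lam r" using False2 f3 by simp
        define k where "k = (LEAST i. j < lam0 lam i)"
        have jk: "j < lam0 lam k" unfolding k_def by (rule LeastI[of _ r]) (rule jr)
        have kr: "k \<le> r" unfolding k_def by (rule Least_le) (rule jr)
        have k0: "k \<noteq> 0" using jk lj by (metis lam0_0 less_asym k_def)
        have "\<not> j < lam0 lam (k - 1)" unfolding k_def
          by (rule not_less_Least) (use k0 in \<open>simp add: k_def\<close>)
        then have "lam0 lam (k - 1) < j" using jJ kr by (metis diff_le_self le_trans linorder_neqE_nat)
        then show ?thesis unfolding ab using jk kr k0
          by (intro exI[of _ k]) (simp add: Rbase_def)
      qed
    qed
  qed
qed

lemma mult_add:
  assumes d2: "d \<ge> 2" and S: "(\<Sum>i\<le>r + 1. lam i) = d" and g: "g \<in> Wgrp d"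
    and opc: "\<And>i. order_pres_on (inv g) (Rset r d lam i)"
  shows "set ws \<subseteq> {0..d} - {lam0 lam i |i. i \<le> r} \<Longrightarrow> LL d (wordprod d ws \<circ> g) = LL d (wordprod d ws) + LL d g"
proof (induction ws)
  case Nil then show ?case using LL_id' by simp
next
  case (Cons j ws)
  let ?w = "wordprod d ws"
  have jJ: "j \<le> d" "\<forall>i \<le> r. j \<noteq> lam0 lam i" using Cons.prems by auto
  have wsd: "set ws \<subseteq> {0..d}" using Cons.prems by auto
  have IH: "LL d (?w \<circ> g) = LL d ?w + LL d g" by (rule Cons.IH) (use Cons.prems in auto)
  have wW: "?w \<in> Wgrp d" using word_W[OF d2 wsd] .
  have wgW: "?w \<circ> g \<in> Wgrp d" using Wgrp_comp[OF wW g] .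
  have bw: "bij ?w" and bg: "bij g" using wW g by (auto simp: Wgrp_def)
  have invwg: "inv (?w \<circ> g) = inv g \<circ> inv ?w" using o_inv_distrib[OF bw bg] .
  obtain k where k: "k \<le> r + 1" "aa d j \<in> Rbase r d lam k" "bb d j \<in> Rbase r d lam k"
    using pair_block[OF d2 S jJ] by blast
  let ?u = "inv ?w (aa d j)" and ?v = "inv ?w (bb d j)"
  have uv: "?u \<in> Rset r d lam (int k)" "?v \<in> Rset r d lam (int k)"
  proof -
    have rs: "set (rev ws) \<subseteq> {0..d} - {lam0 lam i |i. i \<le> r}" using Cons.prems by auto
    have "aa d j \<in> Rset r d lam (int k)" "bb d j \<in> Rset r d lam (int k)" using k Rset_base[OF k(1)] by auto
    then show "?u \<in> Rset r d lam (int k)" "?v \<in> Rset r d lam (int k)"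
      unfolding word_inv[OF d2 wsd] using word_Rset[OF d2 S rs] by auto
  qed
  have "aa d j \<noteq> bb d j" using jJ(1) by (auto simp: aa_def bb_def)
  then have uvne: "?u \<noteq> ?v" using bij_imp_bij_inv[OF bw] by (metis bij_is_inj inj_eq)
  have eqv: "inv g ?u < inv g ?v \<longleftrightarrow> ?u < ?v"
  proof
    assume "inv g ?u < inv g ?v"
    show "?u < ?v"
    proof (rule ccontr)
      assume "\<not> ?u < ?v" then have "?v < ?u" using uvne by simp
      then have "inv g ?v < inv g ?u" using opc[of "int k"] uv unfolding order_pres_on_def by blast
      then show False using \<open>inv g ?u < inv g ?v\<close> by simp
    qed
  next
    assume "?u < ?v" then show "inv g ?u < inv g ?v" using opc[of "int k"] uv unfolding order_pres_on_def by blast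
  qed
  have s1: "LL d (sref d j \<circ> (?w \<circ> g)) = (if inv g ?u < inv g ?v then LL d (?w \<circ> g) + 1 else LL d (?w \<circ> g) - 1)"
    using LL_step(1)[OF d2 jJ(1) wgW] unfolding invwg by simp
  have s2: "LL d (sref d j \<circ> ?w) = (if ?u < ?v then LL d ?w + 1 else LL d ?w - 1)"
    using LL_step(1)[OF d2 jJ(1) wW] .
  have s3: "\<not> ?u < ?v \<Longrightarrow> LL d ?w \<ge> 1" using LL_step(2)[OF d2 jJ(1) wW] .
  have "LL d (wordprod d (j # ws) \<circ> g) = LL d (sref d j \<circ> (?w \<circ> g))" by (simp add: comp_assoc)
  also have "\<dots> = LL d (sref d j \<circ> ?w) + LL d g"
    unfolding s1 s2 eqv IH using s3 by auto
  also have "LL d (sref d j \<circ> ?w) = LL d (wordprod d (j # ws))" by simp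
  finally show ?case .
qed

theorem lemma2p2p2:
  fixes r d :: nat and lam :: "nat \<Rightarrow> nat" and g :: "int \<Rightarrow> int"
  assumes "d \<ge> 2"
    and "(\<Sum>i\<le>r + 1. lam i) = d"
    and "g \<in> Wgrp d"
  shows "(g \<in> Dlam r d lam \<longleftrightarrow> (\<forall>i\<in>{0..r + 1}. order_pres_on (inv g) (Rset r d lam (int i))))
       \<and> (g \<in> Dlam r d lam \<longleftrightarrow> (\<forall>i::int. order_pres_on (inv g) (Rset r d lam i)))"
proof -
  note d2 = assms(1) and S = assms(2) and g = assms(3)
  have fW: "inv g \<in> Wgrp d" using Wgrp_inv[OF g] .
  have po: "perD d (inv g)" "oddf (inv g)" using Wgrp_po[OF fW] by auto
  have AB: "(\<forall>i\<in>{0..r + 1}. order_pres_on (inv g) (Rset r d lam (int i)))" if D: "g \<in> Dlam r d lam"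
  proof -
    have asc: "inv g (aa d j) < inv g (bb d j)" if j: "j \<le> d" "\<forall>i \<le> r. j \<noteq> lam0 lam i" for j
    proof -
      have sW: "sref d j \<in> Wlam r d lam" unfolding Wlam_def Wpar_def
        using j by (intro CollectI exI[of _ "[j]"]) auto
      have sgW: "sref d j \<circ> g \<in> Wgrp d" using Wgrp_comp[OF sref_W[OF d2 j(1)] g] .
      have "coxlen d (sref d j \<circ> g) = coxlen d (sref d j) + coxlen d g" using D sW by (auto simp: Dlam_def)
      then have eq: "LL d (sref d j \<circ> g) = LL d (sref d j) + LL d g"
        using coxlen_LL[OF d2] sgW sref_W[OF d2 j(1)] g by simp
      have "LL d (sref d j \<circ> id) = (if inv id (aa d j) < inv id (bb d j) then LL d id + 1 else LL d id - 1)"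
        using LL_step(1)[OF d2 j(1) Wgrp_id] .
      moreover have "aa d j < bb d j" by (auto simp: aa_def bb_def)
      ultimately have "LL d (sref d j) = 1" using LL_id by (simp add: inv_id)
      then have "LL d (sref d j \<circ> g) = LL d g + 1" using eq by simp
      then show ?thesis using LL_step(1)[OF d2 j(1) g] by (auto split: if_splits)
    qed
    show ?thesis using asc_op[OF d2 S fW asc] Rset_base by auto
  qed
  have BC: "\<forall>i::int. order_pres_on (inv g) (Rset r d lam i)"
    if B: "\<forall>i\<in>{0..r + 1}. order_pres_on (inv g) (Rset r d lam (int i))"
  proof
    fix i :: int
    have "order_pres_on (inv g) (Rbase r d lam k)" if "k \<le> r + 1" for k
    proof -
      have "order_pres_on (inv g) (Rset r d lam (int k))" using B that by auto
      then show ?thesis using Rset_base[OF that] by simp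
    qed
    then show "order_pres_on (inv g) (Rset r d lam i)" using op_Rset[OF po] by blast
  qed
  have CA: "g \<in> Dlam r d lam" if C: "\<forall>i::int. order_pres_on (inv g) (Rset r d lam i)"
  proof -
    have "coxlen d (w \<circ> g) = coxlen d w + coxlen d g" if w: "w \<in> Wlam r d lam" for w
    proof -
      obtain ws where ws: "set ws \<subseteq> {0..d} - {lam0 lam i |i. i \<le> r}" "w = wordprod d ws"
        using w unfolding Wlam_def Wpar_def by blast
      have wsd: "set ws \<subseteq> {0..d}" using ws by auto
      have wW: "w \<in> Wgrp d" using word_W[OF d2 wsd] ws by simp
      have "LL d (w \<circ> g) = LL d w + LL d g" using mult_add[OF d2 S g _ ws(1)] C ws(2) by simp
      then show ?thesis using coxlen_LL[OF d2] wW g Wgrp_comp[OF wW g] by simp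
    qed
    then show ?thesis using g by (simp add: Dlam_def)
  qed
  show ?thesis using AB BC CA by blast
qed

end
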